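(* Let a binary game be given as described in the context, and suppose Assumptions (A1), (A2) and (A3) hold. Then problem (P) can be reformulated exactly as a mixed-integer program whose objective is linear or convex quadratic and whose constraints are all linear; for this reformulation the conclusions of the following two statements remain valid: (a) under (A1), $(x_i,y_i)_{i\in I}$ is a Nash equilibrium iff it extends, with all $\zeta_i^{(1)}=\zeta_i^{(0)}=0$, to a feasible point; (b) under (A1),(A2), every optimal solution yields a binary quasi-equilibrium $(x_i,y_i)_{i\in I}$ with compensation $\zeta_i=\zeta_i^{(1)}+\zeta_i^{(0)}$, and every binary quasi-equilibrium extends to a feasible point.
   Context: Binary game: players $i\in I=\{1,\dots,n\}$. Player $i$ chooses $x_i\in\{0,1\}$ and $y_i\in\mathbb{R}^m$ and solves $\min f_i(x_i,y_i,y_{-i})$ subject to $g_i(x_i,y_i)\le 0$, with $g_i:\{0,1\}\times\mathbb{R}^m\to\mathbb{R}^k$, $y_{-i}=(y_j)_{j\ne i}$; $K_i=\{(x_i,y_i):g_i(x_i,y_i)\le0\}$. Nash equilibrium: $((x_i^*,y_i^* )\in K_i)_{i}$ such that for every $i$, $y_i^*$ minimizes $f_i(x_i^*,\cdot,y_{-i}^* )$ over $\{y_i:g_i(x_i^*,y_i)\le0\}$ and $f_i(x_i^*,y_i^*,y_{-i}^* )\le f_i(x_i^\times,y_i^\times,y_{-i}^* )$, where $x_i^\times=1-x_i^*$ and $y_i^\times$ minimizes $f_i(x_i^\times,\cdot,y_{-i}^* )$ over $\{y_i:g_i(x_i^\times,y_i)\le0\}$. Binary quasi-equilibrium: same first condition,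 plus compensations $\zeta_i\ge0$ with $f_i(x_i^*,y_i^*,y_{-i}^* )-\zeta_i\le f_i(x_i^\times,y_i^\times,y_{-i}^* )$, $\zeta_i$ minimal with this property. (A1): for each $i$ and fixed $x_i$ (and $y_{-i}$), the KKT conditions w.r.t. $y_i$ are necessary and sufficient, and $\{y_i:g_i(x_i,y_i)\le0\}$ is compact and non-empty. (A2): $F,G$ (below) are convex quadratic or linear for each fixed binary vector, and $\partial G/\partial\zeta_i>0$. (A3): $f_i(x_i,y_i,y_{-i})=f_i^{(x)}(x_i,y_{-i})+f_i^{(y)}(y_i\mid y_{-i})$, where $f_i^{(x)}$ is linear in $x_i$ and $y_{-i}$, $f_i^{(y)}$ is linear in $y_i$ for fixed $y_{-i}$, and $\nabla_{y_i}f_i^{(y)}$ is linear in all variables; and the constraints are affine: $g_i(x_i,y_i)\le0$ reads $a_ix_i+A_iy_i\le b_i$ for vectors $a_i,b_i$ and a matrix $A_i$. Problem (P): with a sufficiently large constant $\widetilde K>0$, minimize $F((x_i,y_i)_{i})+G((\zeta_i^{(1)},\zeta_i^{(0)})_{i})$ over $x_i\in\{0,1\}$, $y_i,\widetilde y_i^{(1)},\widetilde y_i^{(0)}\in\mathbb{R}^m$, $\widetilde\lambda_i^{(b)}\in\mathbb{R}^k_+$, $\kappa_i^{(b)},\zeta_i^{(b)}\ge0$, subject to, for all $i$, $b\in\{0,1\}$: $\nabla_{y_i} f_i(b,\widetilde y_i^{(b)},y_{-i})+(\widetilde\lambda_i^{(b)})^T\nabla_{y_i} g_i(b,\widetilde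 y_i^{(b)})=0$; $0\le -g_i(b,\widetilde y_i^{(b)})\perp\widetilde\lambda_i^{(b)}\ge0$; $f_i(1,\widetilde y_i^{(1)},y_{-i})+\kappa_i^{(1)}-\zeta_i^{(1)}-\kappa_i^{(0)}+\zeta_i^{(0)}=f_i(0,\widetilde y_i^{(0)},y_{-i})$; $\kappa_i^{(1)}+\zeta_i^{(1)}\le x_i\widetilde K$; $\kappa_i^{(0)}+\zeta_i^{(0)}\le(1-x_i)\widetilde K$; $\widetilde y_i^{(0)}-x_i\widetilde K\le y_i\le\widetilde y_i^{(0)}+x_i\widetilde K$; $\widetilde y_i^{(1)}-(1-x_i)\widetilde K\le y_i\le\widetilde y_i^{(1)}+(1-x_i)\widetilde K$. *)

theory Defs
  imports "HOL-Analysis.Analysis"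
begin

text \<open>A strategy
 profile is x :: real^'p, y :: (real^'m)^'p.  The cost f i xi yi Y takes the whole profile Y;
 its independence of the i-th component Y$i (i.e. dependence on y_{-i} only) is a
 hypothesis of the theorem.\<close>

definition grad :: "('a::real_inner \<Rightarrow> real) \<Rightarrow> 'a \<Rightarrow> 'a" where
  "grad \<phi> v = (SOME D. GDERIV \<phi> v :> D)"

definition Kset :: "('p \<Rightarrow> real \<Rightarrow> real^'m \<Rightarrow> real^'k) \<Rightarrow> 'p \<Rightarrow> real \<Rightarrow> (real^'m) set" where
  "Kset g i xi = {yi. \<forall>l. g i xi yi $ l \<le> 0}"

definition is_argmin ::
  "('p \<Rightarrow> real \<Rightarrow> real^'m \<Rightarrow> (real^'m)^'p \<Rightarrow> real) \<Rightarrow> ('p \<Rightarrow> real \<Rightarrow> real^'m \<Rightarrow> real^'k)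
   \<Rightarrow> 'p \<Rightarrow> real \<Rightarrow> (real^'m)^'p \<Rightarrow> real^'m \<Rightarrow> bool" where
  "is_argmin f g i xi Y yi \<longleftrightarrow>
     yi \<in> Kset g i xi \<and> (\<forall>y' \<in> Kset g i xi. f i xi yi Y \<le> f i xi y' Y)"

definition KKT ::
  "('p \<Rightarrow> real \<Rightarrow> real^'m \<Rightarrow> (real^'m)^'p \<Rightarrow> real) \<Rightarrow> ('p \<Rightarrow> real \<Rightarrow> real^'m \<Rightarrow> real^'k)
   \<Rightarrow> 'p \<Rightarrow> real \<Rightarrow> (real^'m)^'p \<Rightarrow> real^'m \<Rightarrow> real^'k \<Rightarrow> bool" where
  "KKT f g i xi Y yi lam \<longleftrightarrow>
     (\<forall>l. 0 \<le> lam $ l) \<and>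
     grad (\<lambda>v. f i xi v Y) yi + (\<Sum>l\<in>UNIV. lam $ l *\<^sub>R grad (\<lambda>v. g i xi v $ l) yi) = 0 \<and>
     (\<forall>l. g i xi yi $ l \<le> 0) \<and>
     (\<forall>l. lam $ l * g i xi yi $ l = 0)"

definition A1 ::
  "('p \<Rightarrow> real \<Rightarrow> real^'m \<Rightarrow> (real^'m)^'p \<Rightarrow> real) \<Rightarrow> ('p \<Rightarrow> real \<Rightarrow> real^'m \<Rightarrow> real^'k) \<Rightarrow> bool" where
  "A1 f g \<longleftrightarrow> (\<forall>i xi Y. xi \<in> {0,1} \<longrightarrow>
      compact (Kset g i xi) \<and> Kset g i xi \<noteq> {} \<and>
      (\<forall>yi. is_argmin f g i xi Y yi \<longleftrightarrow> (\<exists>lam. KKT f g i xi Y yi lam)))"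

definition cq_or_lin :: "('a::euclidean_space \<Rightarrow> real) \<Rightarrow> bool" where
  "cq_or_lin \<phi> \<longleftrightarrow> (\<exists>Q c d. linear Q \<and> (\<forall>v. 0 \<le> v \<bullet> Q v) \<and> (\<forall>v. \<phi> v = v \<bullet> Q v + c \<bullet> v + d))"

definition A2 :: "(real^'p \<Rightarrow> (real^'m)^'p \<Rightarrow> real) \<Rightarrow> ((real^'p) \<times> (real^'p) \<Rightarrow> real) \<Rightarrow> bool" where
  "A2 F G \<longleftrightarrow>
     (\<forall>x. (\<forall>i. x $ i \<in> {0,1}) \<longrightarrow> cq_or_lin (F x)) \<and>
     cq_or_lin G \<and>
     (\<forall>z1 z0. (\<forall>i. 0 \<le> z1 $ i \<and> 0 \<le> z0 $ i) \<longrightarrow> (\<forall>i.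
        (\<exists>D>0. ((\<lambda>t. G (z1 + t *\<^sub>R axis i 1, z0)) has_real_derivative D) (at 0)) \<and>
        (\<exists>D>0. ((\<lambda>t. G (z1, z0 + t *\<^sub>R axis i 1)) has_real_derivative D) (at 0))))"

definition A3 ::
  "('p \<Rightarrow> real \<Rightarrow> real^'m \<Rightarrow> (real^'m)^'p \<Rightarrow> real) \<Rightarrow> ('p \<Rightarrow> real \<Rightarrow> real^'m \<Rightarrow> real^'k) \<Rightarrow> bool" where
  "A3 f g \<longleftrightarrow>
     (\<forall>i. \<exists>fx fy.
        (\<forall>xi yi Y. f i xi yi Y = fx xi Y + fy yi Y) \<and>
        (\<exists>\<alpha> \<beta> \<gamma>. \<forall>xi Y. fx xi Y = \<alpha> * xi + (\<Sum>j\<in>UNIV - {i}. \<beta> j \<bullet> Y $ j) + \<gamma>) \<and>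
        (\<exists>c0 M h. \<forall>yi Y. fy yi Y = (c0 + (\<Sum>j\<in>UNIV - {i}. M j *v Y $ j)) \<bullet> yi + h Y)) \<and>
     (\<forall>i. \<exists>(a::real^'k) (A::real^'m^'k) b. \<forall>xi yi. g i xi yi = xi *\<^sub>R a + A *v yi - b)"

definition NE ::
  "('p \<Rightarrow> real \<Rightarrow> real^'m \<Rightarrow> (real^'m)^'p \<Rightarrow> real) \<Rightarrow> ('p \<Rightarrow> real \<Rightarrow> real^'m \<Rightarrow> real^'k)
   \<Rightarrow> real^'p \<Rightarrow> (real^'m)^'p \<Rightarrow> bool" where
  "NE f g x y \<longleftrightarrow> (\<forall>i. x $ i \<in> {0,1} \<and> is_argmin f g i (x $ i) y (y $ i) \<and>
      (\<exists>yx. is_argmin f g i (1 - x $ i) y yx \<and> f i (x $ i) (y $ i) y \<le> f i (1 - x $ i) yx y))"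

definition BQE ::
  "('p \<Rightarrow> real \<Rightarrow> real^'m \<Rightarrow> (real^'m)^'p \<Rightarrow> real) \<Rightarrow> ('p \<Rightarrow> real \<Rightarrow> real^'m \<Rightarrow> real^'k)
   \<Rightarrow> real^'p \<Rightarrow> (real^'m)^'p \<Rightarrow> real^'p \<Rightarrow> bool" where
  "BQE f g x y \<zeta> \<longleftrightarrow> (\<forall>i. x $ i \<in> {0,1} \<and> is_argmin f g i (x $ i) y (y $ i) \<and> 0 \<le> \<zeta> $ i \<and>
      (\<exists>yx. is_argmin f g i (1 - x $ i) y yx \<and>
         f i (x $ i) (y $ i) y - \<zeta> $ i \<le> f i (1 - x $ i) yx y \<and>
         (\<forall>\<zeta>'\<ge>0. f i (x $ i) (y $ i) y - \<zeta>' \<le> f i (1 - x $ i) yx y \<longrightarrow> \<zeta> $ i \<le> \<zeta>')))"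

definition P_feas ::
  "('p \<Rightarrow> real \<Rightarrow> real^'m \<Rightarrow> (real^'m)^'p \<Rightarrow> real) \<Rightarrow> ('p \<Rightarrow> real \<Rightarrow> real^'m \<Rightarrow> real^'k) \<Rightarrow> real
   \<Rightarrow> real^'p \<Rightarrow> (real^'m)^'p \<Rightarrow> (real^'m)^'p \<Rightarrow> (real^'m)^'p \<Rightarrow> (real^'k)^'p \<Rightarrow> (real^'k)^'p
   \<Rightarrow> real^'p \<Rightarrow> real^'p \<Rightarrow> real^'p \<Rightarrow> real^'p \<Rightarrow> bool" where
  "P_feas f g K x y yt1 yt0 l1 l0 k1 k0 z1 z0 \<longleftrightarrow> (\<forall>i.
     x $ i \<in> {0,1} \<and>
     KKT f g i 1 y (yt1 $ i) (l1 $ i) \<and> KKT f g i 0 y (yt0 $ i) (l0 $ i) \<and>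
     0 \<le> k1 $ i \<and> 0 \<le> k0 $ i \<and> 0 \<le> z1 $ i \<and> 0 \<le> z0 $ i \<and>
     f i 1 (yt1 $ i) y + k1 $ i - z1 $ i - k0 $ i + z0 $ i = f i 0 (yt0 $ i) y \<and>
     k1 $ i + z1 $ i \<le> x $ i * K \<and> k0 $ i + z0 $ i \<le> (1 - x $ i) * K \<and>
     (\<forall>l. yt0 $ i $ l - x $ i * K \<le> y $ i $ l \<and> y $ i $ l \<le> yt0 $ i $ l + x $ i * K) \<and>
     (\<forall>l. yt1 $ i $ l - (1 - x $ i) * K \<le> y $ i $ l \<and> y $ i $ l \<le> yt1 $ i $ l + (1 - x $ i) * K))"

text \<open>Mixed-integer program in variables z :: nat => real (coordinates 0..N-1), binary
 coordinates Bin, linear constraints sum_j A r j * z j <= b r for r < R (equalities are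
 pairs of inequalities), objective z^T Q z + c^T z + d with Q positive semidefinite
 (Q = 0 gives the linear case).\<close>
definition mip_feasible ::
  "nat \<Rightarrow> nat set \<Rightarrow> nat \<Rightarrow> (nat \<Rightarrow> nat \<Rightarrow> real) \<Rightarrow> (nat \<Rightarrow> real) \<Rightarrow> (nat \<Rightarrow> real) \<Rightarrow> bool" where
  "mip_feasible N Bin R A b z \<longleftrightarrow> (\<forall>j\<ge>N. z j = 0) \<and> (\<forall>j\<in>Bin. z j \<in> {0,1}) \<and>
     (\<forall>r<R. (\<Sum>j<N. A r j * z j) \<le> b r)"

definition mip_obj :: "nat \<Rightarrow> (nat \<Rightarrow> nat \<Rightarrow> real) \<Rightarrow> (nat \<Rightarrow> real) \<Rightarrow> real \<Rightarrow> (nat \<Rightarrow> real) \<Rightarrow> real" where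
  "mip_obj N Q c d z = (\<Sum>j<N. \<Sum>k<N. Q j k * z j * z k) + (\<Sum>j<N. c j * z j) + d"

definition psd :: "nat \<Rightarrow> (nat \<Rightarrow> nat \<Rightarrow> real) \<Rightarrow> bool" where
  "psd N Q \<longleftrightarrow> (\<forall>v. 0 \<le> (\<Sum>j<N. \<Sum>k<N. Q j k * v j * v k))"

definition xof :: "('p + ('p \<times> 'm) + 'p + 'p \<Rightarrow> nat) \<Rightarrow> (nat \<Rightarrow> real) \<Rightarrow> real^'p" where
  "xof idx z = (\<chi> i. z (idx (Inl i)))"
definition yof :: "('p + ('p \<times> 'm) + 'p + 'p \<Rightarrow> nat) \<Rightarrow> (nat \<Rightarrow> real) \<Rightarrow> (real^'m::finite)^'p" where
  "yof idx z = (\<chi> i. \<chi> l. z (idx (Inr (Inl (i, l)))))"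
definition z1of :: "('p + ('p \<times> 'm) + 'p + 'p \<Rightarrow> nat) \<Rightarrow> (nat \<Rightarrow> real) \<Rightarrow> real^'p" where
  "z1of idx z = (\<chi> i. z (idx (Inr (Inr (Inl i)))))"
definition z0of :: "('p + ('p \<times> 'm) + 'p + 'p \<Rightarrow> nat) \<Rightarrow> (nat \<Rightarrow> real) \<Rightarrow> real^'p" where
  "z0of idx z = (\<chi> i. z (idx (Inr (Inr (Inr i)))))"

end

theory Submission
  imports Defs
begin

definition affn :: "(('v::finite \<Rightarrow> real) \<Rightarrow> real) \<Rightarrow> bool" where
  "affn \<phi> \<longleftrightarrow> (\<exists>a c. \<forall>u. \<phi> u = (\<Sum>v\<in>UNIV. a v * u v) + c)"

lemma affn_const: "affn (\<lambda>u. c)"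
  unfolding affn_def by (rule exI[of _ "\<lambda>_. 0"], rule exI[of _ c]) simp

lemma affn_var: "affn (\<lambda>u. u v)"
proof -
  have e: "(if w = v then 1 else 0) * x = (if w = v then x else 0)" for w and x :: real by simp
  have "(\<Sum>w\<in>UNIV. (if w = v then 1 else 0) * u w) + 0 = u v" for u :: "_ \<Rightarrow> real"
    unfolding e by simp
  then show ?thesis unfolding affn_def by metis
qed

lemma affn_add: "affn f \<Longrightarrow> affn g \<Longrightarrow> affn (\<lambda>u. f u + g u)"
proof -
  assume "affn f" "affn g"
  then obtain a c a' c' where "\<forall>u. f u = (\<Sum>v\<in>UNIV. a v * u v) + c" "\<forall>u. g u = (\<Sum>v\<in>UNIV. a' v * u v) + c'"
    unfolding affn_def by blast
  then show ?thesis unfolding affn_def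
    by (intro exI[of _ "\<lambda>v. a v + a' v"] exI[of _ "c + c'"]) (simp add: distrib_right sum.distrib)
qed

lemma affn_cmult: "affn f \<Longrightarrow> affn (\<lambda>u. k * f u)"
  unfolding affn_def
  apply (elim exE)
  subgoal for a c
    by (rule exI[of _ "\<lambda>v. k * a v"], rule exI[of _ "k * c"])
       (simp add: distrib_left sum_distrib_left mult.assoc)
  done

lemma affn_multc: "affn f \<Longrightarrow> affn (\<lambda>u. f u * k)"
  using affn_cmult[of f k] by (simp add: mult.commute)

lemma affn_neg: "affn f \<Longrightarrow> affn (\<lambda>u. - f u)"
  using affn_cmult[of f "-1"] by simp

lemma affn_diff: "affn f \<Longrightarrow> affn g \<Longrightarrow> affn (\<lambda>u. f u - g u)"
  using affn_add[of f "\<lambda>u. - g u"] affn_neg[of g] by simp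

lemma affn_sum: "finite A \<Longrightarrow> (\<And>i. i \<in> A \<Longrightarrow> affn (f i)) \<Longrightarrow> affn (\<lambda>u. \<Sum>i\<in>A. f i u)"
proof (induction A rule: finite_induct)
  case empty then show ?case using affn_const[of 0] by simp
next
  case (insert x F)
  then show ?case using affn_add[of "f x" "\<lambda>u. \<Sum>i\<in>F. f i u"] by simp
qed

lemmas affn_rules = affn_var affn_const affn_add affn_diff affn_neg affn_cmult affn_multc

definition lindesc :: "(('v::finite \<Rightarrow> real) \<Rightarrow> bool) \<Rightarrow> bool" where
  "lindesc P \<longleftrightarrow> (\<exists>L. \<forall>u. P u \<longleftrightarrow> (\<forall>(a,c)\<in>set L. (\<Sum>v\<in>UNIV. a v * u v) \<le> c))"

lemma lindesc_le0: "affn f \<Longrightarrow> lindesc (\<lambda>u. f u \<le> 0)"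
  unfolding affn_def lindesc_def
  apply (elim exE)
  subgoal for a c
    by (rule exI[of _ "[(a, -c)]"]) auto
  done

lemma lindesc_le: "affn f \<Longrightarrow> affn g \<Longrightarrow> lindesc (\<lambda>u. f u \<le> g u)"
  using lindesc_le0[of "\<lambda>u. f u - g u"] affn_diff[of f g] by simp

lemma lindesc_conj: "lindesc P \<Longrightarrow> lindesc Q \<Longrightarrow> lindesc (\<lambda>u. P u \<and> Q u)"
  unfolding lindesc_def
  apply (elim exE)
  subgoal for L L'
    by (rule exI[of _ "L @ L'"]) auto
  done

lemma lindesc_eq: "affn f \<Longrightarrow> affn g \<Longrightarrow> lindesc (\<lambda>u. f u = g u)"
  using lindesc_conj[OF lindesc_le[of f g] lindesc_le[of g f]]
  by (simp add: order_eq_iff)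

lemma lindesc_True: "lindesc (\<lambda>u. True)"
  unfolding lindesc_def by (rule exI[of _ "[]"]) simp

lemma lindesc_imp: "(c \<Longrightarrow> lindesc P) \<Longrightarrow> lindesc (\<lambda>u. c \<longrightarrow> P u)"
  by (cases c) (auto simp: lindesc_True)

lemma lindesc_list: "(\<And>i. i \<in> set xs \<Longrightarrow> lindesc (P i)) \<Longrightarrow> lindesc (\<lambda>u. \<forall>i\<in>set xs. P i u)"
proof (induction xs)
  case Nil then show ?case by (simp add: lindesc_True)
next
  case (Cons x xs)
  then show ?case using lindesc_conj[of "P x" "\<lambda>u. \<forall>i\<in>set xs. P i u"] by simp
qed

lemma lindesc_ball: "finite A \<Longrightarrow> (\<And>i. i \<in> A \<Longrightarrow> lindesc (P i)) \<Longrightarrow> lindesc (\<lambda>u. \<forall>i\<in>A. P i u)"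
proof -
  assume "finite A" "\<And>i. i \<in> A \<Longrightarrow> lindesc (P i)"
  moreover obtain xs where "set xs = A" using \<open>finite A\<close> finite_list by blast
  ultimately show ?thesis using lindesc_list[of xs P] by simp
qed

lemma lindesc_all: "(\<And>i::'i::finite. lindesc (P i)) \<Longrightarrow> lindesc (\<lambda>u. \<forall>i. P i u)"
  using lindesc_ball[of "UNIV::'i set" P] by simp

lemmas lindesc_rules = lindesc_conj lindesc_all lindesc_imp lindesc_eq lindesc_le lindesc_True

definition qpsd :: "(('v::finite \<Rightarrow> real) \<Rightarrow> real) \<Rightarrow> bool" where
  "qpsd \<phi> \<longleftrightarrow> (\<exists>Q a c. (\<forall>u. \<phi> u = (\<Sum>v\<in>UNIV. \<Sum>w\<in>UNIV. Q v w * u v * u w) + (\<Sum>v\<in>UNIV. a v * u v) + c)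
      \<and> (\<forall>u. 0 \<le> (\<Sum>v\<in>UNIV. \<Sum>w\<in>UNIV. Q v w * u v * u w)))"

lemma qpsd_affn: "affn f \<Longrightarrow> qpsd f"
  unfolding affn_def qpsd_def
  apply (elim exE)
  subgoal for a c
    by (rule exI[of _ "\<lambda>_ _. 0"], rule exI[of _ a], rule exI[of _ c]) simp
  done

lemma qpsd_add: "qpsd f \<Longrightarrow> qpsd g \<Longrightarrow> qpsd (\<lambda>u. f u + g u)"
proof -
  assume "qpsd f" "qpsd g"
  then obtain Q a c Q' a' c' where
     1: "\<forall>u. f u = (\<Sum>v\<in>UNIV. \<Sum>w\<in>UNIV. Q v w * u v * u w) + (\<Sum>v\<in>UNIV. a v * u v) + c"
        "\<forall>u. 0 \<le> (\<Sum>v\<in>UNIV. \<Sum>w\<in>UNIV. Q v w * u v * u w)"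
     and 2: "\<forall>u. g u = (\<Sum>v\<in>UNIV. \<Sum>w\<in>UNIV. Q' v w * u v * u w) + (\<Sum>v\<in>UNIV. a' v * u v) + c'"
        "\<forall>u. 0 \<le> (\<Sum>v\<in>UNIV. \<Sum>w\<in>UNIV. Q' v w * u v * u w)"
    unfolding qpsd_def by blast
  show ?thesis unfolding qpsd_def
    apply (intro exI[of _ "\<lambda>v w. Q v w + Q' v w"] exI[of _ "\<lambda>v. a v + a' v"] exI[of _ "c + c'"])
    using 1 2 by (simp add: distrib_right sum.distrib add_nonneg_nonneg)
qed

lemma qpsd_sum: "finite A \<Longrightarrow> (\<And>i. i \<in> A \<Longrightarrow> qpsd (f i)) \<Longrightarrow> qpsd (\<lambda>u. \<Sum>i\<in>A. f i u)"
proof (induction A rule: finite_induct)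
  case empty then show ?case using qpsd_affn[OF affn_const[of 0]] by simp
next
  case (insert x F)
  then show ?case using qpsd_add[of "f x" "\<lambda>u. \<Sum>i\<in>F. f i u"] by simp
qed

lemma qpsd_comp:
  fixes q :: "'a::euclidean_space \<Rightarrow> real"
  assumes q: "cq_or_lin q" and L: "\<And>u. L u = (\<Sum>v\<in>UNIV. u v *\<^sub>R B v)"
  shows "qpsd (\<lambda>u. q (L u))"
proof -
  obtain Q c d where Q: "linear Q" "\<And>v. 0 \<le> v \<bullet> Q v" "\<And>v. q v = v \<bullet> Q v + c \<bullet> v + d"
    using q unfolding cq_or_lin_def by blast
  have quad: "L u \<bullet> Q (L u) = (\<Sum>v\<in>UNIV. \<Sum>w\<in>UNIV. (B v \<bullet> Q (B w)) * u v * u w)" for u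
    unfolding L using Q(1)
    apply (simp add: linear_sum linear_scale inner_sum_left inner_sum_right sum_distrib_left)
    apply (subst sum.swap)
    apply (simp add: ac_simps)
    done
  have lin: "c \<bullet> L u = (\<Sum>v\<in>UNIV. (c \<bullet> B v) * u v)" for u
    unfolding L by (simp add: inner_sum_right mult.commute)
  show ?thesis unfolding qpsd_def
    apply (rule exI[of _ "\<lambda>v w. B v \<bullet> Q (B w)"], rule exI[of _ "\<lambda>v. c \<bullet> B v"], rule exI[of _ d])
    using quad lin Q(2,3) by metis
qed

lemma grad_affine:
  fixes c :: "'a::real_inner"
  assumes "\<And>v. \<phi> v = c \<bullet> v + k"
  shows "grad \<phi> w = c"
proof -
  have eq: "\<phi> = (\<lambda>v. v \<bullet> c + k)" using assms by (auto simp: inner_commute)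
  have d: "GDERIV \<phi> w :> c"
    unfolding gderiv_def eq
    by (auto intro!: derivative_eq_intros)
  have u: "D = c" if "GDERIV \<phi> w :> D" for D
  proof -
    have "(\<lambda>h. h \<bullet> D) = (\<lambda>h. h \<bullet> c)" using has_derivative_unique that d unfolding gderiv_def by blast
    then have "(D - c) \<bullet> D = (D - c) \<bullet> c" by metis
    then have "(D - c) \<bullet> (D - c) = 0" by (simp add: inner_diff_right)
    then show "D = c" by simp
  qed
  have "GDERIV \<phi> w :> grad \<phi> w" unfolding grad_def by (rule someI[of _ c]) (rule d)
  then show ?thesis using u by blast
qed

locale gm =
  fixes f :: "'p::finite \<Rightarrow> real \<Rightarrow> real^'m::finite \<Rightarrow> (real^'m)^'p \<Rightarrow> real"
    and g :: "'p \<Rightarrow> real \<Rightarrow> real^'m \<Rightarrow> real^'k::finite"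
    and c0 :: "'p \<Rightarrow> real^'m" and M :: "'p \<Rightarrow> 'p \<Rightarrow> real^'m^'m"
    and rest :: "'p \<Rightarrow> real \<Rightarrow> (real^'m)^'p \<Rightarrow> real"
    and al :: "'p \<Rightarrow> real" and a :: "'p \<Rightarrow> real^'k" and Am :: "'p \<Rightarrow> real^'m^'k" and bb :: "'p \<Rightarrow> real^'k"
  assumes fdec: "\<And>i xi v Y. f i xi v Y = (c0 i + (\<Sum>j\<in>UNIV-{i}. M i j *v Y$j)) \<bullet> v + rest i xi Y"
    and rdiff: "\<And>i Y. rest i 1 Y - rest i 0 Y = al i"
    and gdec: "\<And>i xi v. g i xi v = xi *\<^sub>R a i + Am i *v v - bb i"
begin

definition cY :: "'p \<Rightarrow> (real^'m)^'p \<Rightarrow> real^'m" where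
  "cY i Y = c0 i + (\<Sum>j\<in>UNIV-{i}. M i j *v Y$j)"

lemma fdec': "f i xi v Y = cY i Y \<bullet> v + rest i xi Y"
  using fdec unfolding cY_def by simp

lemma fdiff: "f i 1 v Y - f i 0 v' Y = al i + cY i Y \<bullet> v - cY i Y \<bullet> v'"
  using rdiff[of i Y] by (simp add: fdec')

lemma cY_comp: "cY i Y $ l = c0 i $ l + (\<Sum>j\<in>UNIV-{i}. \<Sum>l2\<in>UNIV. M i j $ l $ l2 * Y$j$l2)"
  unfolding cY_def by (simp add: matrix_vector_mult_def)

lemma g_comp: "g i xi v $ l = xi * a i $ l + (\<Sum>l2\<in>UNIV. Am i $ l $ l2 * v $ l2) - bb i $ l"
  unfolding gdec by (simp add: matrix_vector_mult_def)

lemma grad_f: "grad (\<lambda>v. f i xi v Y) w = cY i Y"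
  by (rule grad_affine[where k = "rest i xi Y"]) (simp add: fdec')

lemma grad_g: "grad (\<lambda>v. g i xi v $ l) w = Am i $ l"
  by (rule grad_affine[where k = "xi * a i $ l - bb i $ l"]) (simp add: gdec matrix_vector_mul_component)

lemma KKT_iff: "KKT f g i xi Y yt lam \<longleftrightarrow> (\<forall>l. 0 \<le> lam$l) \<and>
   cY i Y + (\<Sum>l\<in>UNIV. lam$l *\<^sub>R Am i $ l) = 0 \<and> (\<forall>l. g i xi yt $ l \<le> 0) \<and>
   (\<forall>l. lam$l * g i xi yt $ l = 0)"
  unfolding KKT_def grad_f grad_g by simp

lemma KKT_val:
  assumes "KKT f g i xi Y yt lam"
  shows "cY i Y \<bullet> yt = - (\<Sum>l\<in>UNIV. lam$l * (bb i $ l - xi * a i $ l))"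
proof -
  have st: "cY i Y = - (\<Sum>l\<in>UNIV. lam$l *\<^sub>R Am i $ l)" and c: "\<And>l. lam$l * g i xi yt $ l = 0"
    using assms unfolding KKT_iff by (auto simp: add_eq_0_iff)
  have "lam$l * (Am i $ l \<bullet> yt) = lam$l * (bb i $ l - xi * a i $ l)" for l
  proof -
    have "g i xi yt $ l = xi * a i $ l + Am i $ l \<bullet> yt - bb i $ l"
      by (simp add: gdec matrix_vector_mul_component)
    then have "lam$l * (xi * a i $ l + Am i $ l \<bullet> yt - bb i $ l) = 0" using c[of l] by simp
    then have "lam$l * xi * a i $ l + lam$l * (Am i $ l \<bullet> yt) - lam$l * bb i $ l = 0"
      by (simp add: algebra_simps)
    moreover have "lam$l * (bb i $ l - xi * a i $ l) = lam$l * bb i $ l - lam$l * xi * a i $ l"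
      by (simp add: algebra_simps)
    ultimately show ?thesis by linarith
  qed
  note h = this
  show ?thesis unfolding st by (simp add: inner_sum_left h del: mult_eq_0_iff)
qed

end

type_synonym ('p,'m,'k) vr = "('p + ('p \<times> 'm) + 'p + 'p) + ((bool \<times> 'p \<times> 'm) + (bool \<times> 'p \<times> 'k set)
   + (bool \<times> 'p \<times> 'k set \<times> 'm) + (bool \<times> 'p \<times> 'k set \<times> 'k) + (bool \<times> 'p \<times> 'k set) + (bool \<times> 'p)
   + 'p set + ('p set \<times> 'p \<times> 'm))"

abbreviation vx :: "'p \<Rightarrow> ('p,'m,'k) vr" where "vx i \<equiv> Inl (Inl i)"
abbreviation vy :: "'p \<Rightarrow> 'm \<Rightarrow> ('p,'m,'k) vr" where "vy i l \<equiv> Inl (Inr (Inl (i, l)))"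
abbreviation vz1 :: "'p \<Rightarrow> ('p,'m,'k) vr" where "vz1 i \<equiv> Inl (Inr (Inr (Inl i)))"
abbreviation vz0 :: "'p \<Rightarrow> ('p,'m,'k) vr" where "vz0 i \<equiv> Inl (Inr (Inr (Inr i)))"
abbreviation vyt :: "bool \<Rightarrow> 'p \<Rightarrow> 'm \<Rightarrow> ('p,'m,'k) vr" where "vyt b i l \<equiv> Inr (Inl (b, i, l))"
abbreviation vw :: "bool \<Rightarrow> 'p \<Rightarrow> 'k set \<Rightarrow> ('p,'m,'k) vr" where "vw b i S \<equiv> Inr (Inr (Inl (b, i, S)))"
abbreviation vc :: "bool \<Rightarrow> 'p \<Rightarrow> 'k set \<Rightarrow> 'm \<Rightarrow> ('p,'m,'k) vr" where
  "vc b i S l \<equiv> Inr (Inr (Inr (Inl (b, i, S, l))))"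
abbreviation vlam :: "bool \<Rightarrow> 'p \<Rightarrow> 'k set \<Rightarrow> 'k \<Rightarrow> ('p,'m,'k) vr" where
  "vlam b i S l \<equiv> Inr (Inr (Inr (Inr (Inl (b, i, S, l)))))"
abbreviation vt :: "bool \<Rightarrow> 'p \<Rightarrow> 'k set \<Rightarrow> ('p,'m,'k) vr" where
  "vt b i S \<equiv> Inr (Inr (Inr (Inr (Inr (Inl (b, i, S))))))"
abbreviation vk :: "bool \<Rightarrow> 'p \<Rightarrow> ('p,'m,'k) vr" where
  "vk b i \<equiv> Inr (Inr (Inr (Inr (Inr (Inr (Inl (b, i)))))))"
abbreviation vW :: "'p set \<Rightarrow> ('p,'m,'k) vr" where
  "vW X \<equiv> Inr (Inr (Inr (Inr (Inr (Inr (Inr (Inl X)))))))"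
abbreviation vC :: "'p set \<Rightarrow> 'p \<Rightarrow> 'm \<Rightarrow> ('p,'m,'k) vr" where
  "vC X i l \<equiv> Inr (Inr (Inr (Inr (Inr (Inr (Inr (Inr (X, i, l))))))))"

lemma onehot:
  fixes h :: "'a \<Rightarrow> real"
  assumes "finite A" "\<forall>x\<in>A. h x \<in> {0,1}" "sum h A = 1"
  shows "\<exists>s\<in>A. h s = 1 \<and> (\<forall>x\<in>A. x \<noteq> s \<longrightarrow> h x = 0)"
proof -
  have "\<not> (\<forall>x\<in>A. h x = 0)"
  proof
    assume "\<forall>x\<in>A. h x = 0"
    then have "sum h A = 0" by simp
    with assms(3) show False by simp
  qed
  then obtain s where s: "s \<in> A" "h s \<noteq> 0" by blast
  then have hs: "h s = 1" using assms(2) by auto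
  have "h x = 0" if "x \<in> A" "x \<noteq> s" for x
  proof (rule ccontr)
    assume "h x \<noteq> 0"
    then have hx: "h x = 1" using assms(2) that by auto
    have "sum h A = h s + sum h (A - {s})" using assms(1) s(1) by (simp add: sum.remove)
    moreover have "sum h (A - {s}) = h x + sum h (A - {s} - {x})"
      using assms(1) that by (simp add: sum.remove)
    moreover have "sum h (A - {s} - {x}) \<ge> 0" using assms(2) by (intro sum_nonneg) auto
    ultimately show False using hs hx assms(3) by linarith
  qed
  then show ?thesis using s(1) hs by blast
qed

locale gm2 = gm f g c0 M rest al a Am bb
  for f :: "'p::finite \<Rightarrow> real \<Rightarrow> real^'m::finite \<Rightarrow> (real^'m)^'p \<Rightarrow> real"
    and g :: "'p \<Rightarrow> real \<Rightarrow> real^'m \<Rightarrow> real^'k::finite"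
    and c0 M rest al a Am bb +
  fixes F :: "real^'p \<Rightarrow> (real^'m)^'p \<Rightarrow> real"
    and G :: "(real^'p) \<times> (real^'p) \<Rightarrow> real"
    and K By Cc T Bg :: real
  assumes hA1: "A1 f g" and hA2: "A2 F G" and K0: "0 \<le> K"
    and By: "\<And>i xi v l. xi \<in> {0,1} \<Longrightarrow> v \<in> Kset g i xi \<Longrightarrow> \<bar>v$l\<bar> \<le> By"
    and Cc: "\<And>i Y l. (\<forall>j l2. \<bar>Y$j$l2\<bar> \<le> By + K) \<Longrightarrow> \<bar>cY i Y $ l\<bar> \<le> Cc"
    and Tb: "\<And>i Y v. (\<forall>j l2. \<bar>Y$j$l2\<bar> \<le> By + K) \<Longrightarrow> (\<forall>l. \<bar>v$l\<bar> \<le> By) \<Longrightarrow> \<bar>cY i Y \<bullet> v\<bar> \<le> T"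
    and Bg: "\<And>i xi v l. xi \<in> {0,1} \<Longrightarrow> v \<in> Kset g i xi \<Longrightarrow> \<bar>g i xi v $ l\<bar> \<le> Bg"
begin

definition gl :: "bool \<Rightarrow> 'p \<Rightarrow> 'k \<Rightarrow> (('p,'m,'k) vr \<Rightarrow> real) \<Rightarrow> real" where
  "gl b i l' u = of_bool b * a i $ l' + (\<Sum>l\<in>UNIV. Am i $ l' $ l * u (vyt b i l)) - bb i $ l'"

definition Phi :: "(('p,'m,'k) vr \<Rightarrow> real) \<Rightarrow> bool" where
  "Phi u \<longleftrightarrow>
   (\<forall>b i l'. gl b i l' u \<le> 0) \<and>
   (\<forall>b i. (\<Sum>S\<in>UNIV. u (vw b i S)) = 1) \<and>
   (\<forall>b i l. (\<Sum>S\<in>UNIV. u (vc b i S l)) = c0 i $ l + (\<Sum>j\<in>UNIV-{i}. \<Sum>l2\<in>UNIV. M i j $ l $ l2 * u (vy j l2))) \<and>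
   (\<forall>b i S l. u (vc b i S l) \<le> Cc * u (vw b i S) \<and> - (Cc * u (vw b i S)) \<le> u (vc b i S l)) \<and>
   (\<forall>b i S l. u (vc b i S l) + (\<Sum>l'\<in>UNIV. u (vlam b i S l') * Am i $ l' $ l) = 0) \<and>
   (\<forall>b i S l'. 0 \<le> u (vlam b i S l') \<and> (l' \<notin> S \<longrightarrow> u (vlam b i S l') \<le> 0)) \<and>
   (\<forall>b i S l'. l' \<in> S \<longrightarrow> - gl b i l' u \<le> Bg * (1 - u (vw b i S))) \<and>
   (\<forall>b i S. u (vt b i S) = (\<Sum>l'\<in>UNIV. u (vlam b i S l') * (bb i $ l' - of_bool b * a i $ l'))) \<and>
   (\<forall>b i S. u (vt b i S) \<le> T * u (vw b i S) \<and> - (T * u (vw b i S)) \<le> u (vt b i S)) \<and>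
   (\<forall>b i. 0 \<le> u (vk b i)) \<and>
   (\<forall>i. 0 \<le> u (vz1 i) \<and> 0 \<le> u (vz0 i)) \<and>
   (\<forall>i. al i - (\<Sum>S\<in>UNIV. u (vt True i S)) + (\<Sum>S\<in>UNIV. u (vt False i S)) + u (vk True i) - u (vz1 i)
          - u (vk False i) + u (vz0 i) = 0) \<and>
   (\<forall>i. u (vk True i) + u (vz1 i) \<le> u (vx i) * K) \<and>
   (\<forall>i. u (vk False i) + u (vz0 i) \<le> (1 - u (vx i)) * K) \<and>
   (\<forall>i l. u (vyt False i l) - u (vx i) * K \<le> u (vy i l) \<and> u (vy i l) \<le> u (vyt False i l) + u (vx i) * K) \<and>
   (\<forall>i l. u (vyt True i l) - (1 - u (vx i)) * K \<le> u (vy i l) \<and> u (vy i l) \<le> u (vyt True i l) + (1 - u (vx i)) * K) \<and>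
   (\<Sum>X\<in>UNIV. u (vW X)) = 1 \<and>
   (\<forall>i. u (vx i) = (\<Sum>X\<in>{X. i \<in> X}. u (vW X))) \<and>
   (\<forall>i l. u (vy i l) = (\<Sum>X\<in>UNIV. u (vC X i l))) \<and>
   (\<forall>X i l. u (vC X i l) \<le> (By + K) * u (vW X) \<and> - ((By + K) * u (vW X)) \<le> u (vC X i l))"

lemma PhiD1: assumes "Phi u" shows "(\<forall>b i l'. gl b i l' u \<le> 0)"
  by (rule conjunct1[OF assms[unfolded Phi_def]])

lemma PhiD2: assumes "Phi u" shows "(\<forall>b i. (\<Sum>S\<in>UNIV. u (vw b i S)) = 1)"
  by (rule conjunct1[OF conjunct2[OF assms[unfolded Phi_def]]])

lemma PhiD3: assumes "Phi u" shows "(\<forall>b i l. (\<Sum>S\<in>UNIV. u (vc b i S l)) = c0 i $ l + (\<Sum>j\<in>UNIV-{i}. \<Sum>l2\<in>UNIV. M i j $ l $ l2 * u (vy j l2)))"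
  by (rule conjunct1[OF conjunct2[OF conjunct2[OF assms[unfolded Phi_def]]]])

lemma PhiD4: assumes "Phi u" shows "(\<forall>b i S l. u (vc b i S l) \<le> Cc * u (vw b i S) \<and> - (Cc * u (vw b i S)) \<le> u (vc b i S l))"
  by (rule conjunct1[OF conjunct2[OF conjunct2[OF conjunct2[OF assms[unfolded Phi_def]]]]])

lemma PhiD5: assumes "Phi u" shows "(\<forall>b i S l. u (vc b i S l) + (\<Sum>l'\<in>UNIV. u (vlam b i S l') * Am i $ l' $ l) = 0)"
  by (rule conjunct1[OF conjunct2[OF conjunct2[OF conjunct2[OF conjunct2[OF assms[unfolded Phi_def]]]]]])

lemma PhiD6: assumes "Phi u" shows "(\<forall>b i S l'. 0 \<le> u (vlam b i S l') \<and> (l' \<notin> S \<longrightarrow> u (vlam b i S l') \<le> 0))"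
  by (rule conjunct1[OF conjunct2[OF conjunct2[OF conjunct2[OF conjunct2[OF conjunct2[OF assms[unfolded Phi_def]]]]]]])

lemma PhiD7: assumes "Phi u" shows "(\<forall>b i S l'. l' \<in> S \<longrightarrow> - gl b i l' u \<le> Bg * (1 - u (vw b i S)))"
  by (rule conjunct1[OF conjunct2[OF conjunct2[OF conjunct2[OF conjunct2[OF conjunct2[OF conjunct2[OF assms[unfolded Phi_def]]]]]]]])

lemma PhiD8: assumes "Phi u" shows "(\<forall>b i S. u (vt b i S) = (\<Sum>l'\<in>UNIV. u (vlam b i S l') * (bb i $ l' - of_bool b * a i $ l')))"
  by (rule conjunct1[OF conjunct2[OF conjunct2[OF conjunct2[OF conjunct2[OF conjunct2[OF conjunct2[OF conjunct2[OF assms[unfolded Phi_def]]]]]]]]])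

lemma PhiD9: assumes "Phi u" shows "(\<forall>b i S. u (vt b i S) \<le> T * u (vw b i S) \<and> - (T * u (vw b i S)) \<le> u (vt b i S))"
  by (rule conjunct1[OF conjunct2[OF conjunct2[OF conjunct2[OF conjunct2[OF conjunct2[OF conjunct2[OF conjunct2[OF conjunct2[OF assms[unfolded Phi_def]]]]]]]]]])

lemma PhiD10: assumes "Phi u" shows "(\<forall>b i. 0 \<le> u (vk b i))"
  by (rule conjunct1[OF conjunct2[OF conjunct2[OF conjunct2[OF conjunct2[OF conjunct2[OF conjunct2[OF conjunct2[OF conjunct2[OF conjunct2[OF assms[unfolded Phi_def]]]]]]]]]]])

lemma PhiD11: assumes "Phi u" shows "(\<forall>i. 0 \<le> u (vz1 i) \<and> 0 \<le> u (vz0 i))"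
  by (rule conjunct1[OF conjunct2[OF conjunct2[OF conjunct2[OF conjunct2[OF conjunct2[OF conjunct2[OF conjunct2[OF conjunct2[OF conjunct2[OF conjunct2[OF assms[unfolded Phi_def]]]]]]]]]]]])

lemma PhiD12: assumes "Phi u" shows "(\<forall>i. al i - (\<Sum>S\<in>UNIV. u (vt True i S)) + (\<Sum>S\<in>UNIV. u (vt False i S)) + u (vk True i) - u (vz1 i)
          - u (vk False i) + u (vz0 i) = 0)"
  by (rule conjunct1[OF conjunct2[OF conjunct2[OF conjunct2[OF conjunct2[OF conjunct2[OF conjunct2[OF conjunct2[OF conjunct2[OF conjunct2[OF conjunct2[OF conjunct2[OF assms[unfolded Phi_def]]]]]]]]]]]]])

lemma PhiD13: assumes "Phi u" shows "(\<forall>i. u (vk True i) + u (vz1 i) \<le> u (vx i) * K)"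
  by (rule conjunct1[OF conjunct2[OF conjunct2[OF conjunct2[OF conjunct2[OF conjunct2[OF conjunct2[OF conjunct2[OF conjunct2[OF conjunct2[OF conjunct2[OF conjunct2[OF conjunct2[OF assms[unfolded Phi_def]]]]]]]]]]]]]])

lemma PhiD14: assumes "Phi u" shows "(\<forall>i. u (vk False i) + u (vz0 i) \<le> (1 - u (vx i)) * K)"
  by (rule conjunct1[OF conjunct2[OF conjunct2[OF conjunct2[OF conjunct2[OF conjunct2[OF conjunct2[OF conjunct2[OF conjunct2[OF conjunct2[OF conjunct2[OF conjunct2[OF conjunct2[OF conjunct2[OF assms[unfolded Phi_def]]]]]]]]]]]]]]])

lemma PhiD15: assumes "Phi u" shows "(\<forall>i l. u (vyt False i l) - u (vx i) * K \<le> u (vy i l) \<and> u (vy i l) \<le> u (vyt False i l) + u (vx i) * K)"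
  by (rule conjunct1[OF conjunct2[OF conjunct2[OF conjunct2[OF conjunct2[OF conjunct2[OF conjunct2[OF conjunct2[OF conjunct2[OF conjunct2[OF conjunct2[OF conjunct2[OF conjunct2[OF conjunct2[OF conjunct2[OF assms[unfolded Phi_def]]]]]]]]]]]]]]]])

lemma PhiD16: assumes "Phi u" shows "(\<forall>i l. u (vyt True i l) - (1 - u (vx i)) * K \<le> u (vy i l) \<and> u (vy i l) \<le> u (vyt True i l) + (1 - u (vx i)) * K)"
  by (rule conjunct1[OF conjunct2[OF conjunct2[OF conjunct2[OF conjunct2[OF conjunct2[OF conjunct2[OF conjunct2[OF conjunct2[OF conjunct2[OF conjunct2[OF conjunct2[OF conjunct2[OF conjunct2[OF conjunct2[OF conjunct2[OF assms[unfolded Phi_def]]]]]]]]]]]]]]]]])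

lemma PhiD17: assumes "Phi u" shows "(\<Sum>X\<in>UNIV. u (vW X)) = 1"
  by (rule conjunct1[OF conjunct2[OF conjunct2[OF conjunct2[OF conjunct2[OF conjunct2[OF conjunct2[OF conjunct2[OF conjunct2[OF conjunct2[OF conjunct2[OF conjunct2[OF conjunct2[OF conjunct2[OF conjunct2[OF conjunct2[OF conjunct2[OF assms[unfolded Phi_def]]]]]]]]]]]]]]]]]])

lemma PhiD18: assumes "Phi u" shows "(\<forall>i. u (vx i) = (\<Sum>X\<in>{X. i \<in> X}. u (vW X)))"
  by (rule conjunct1[OF conjunct2[OF conjunct2[OF conjunct2[OF conjunct2[OF conjunct2[OF conjunct2[OF conjunct2[OF conjunct2[OF conjunct2[OF conjunct2[OF conjunct2[OF conjunct2[OF conjunct2[OF conjunct2[OF conjunct2[OF conjunct2[OF conjunct2[OF assms[unfolded Phi_def]]]]]]]]]]]]]]]]]]])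

lemma PhiD19: assumes "Phi u" shows "(\<forall>i l. u (vy i l) = (\<Sum>X\<in>UNIV. u (vC X i l)))"
  by (rule conjunct1[OF conjunct2[OF conjunct2[OF conjunct2[OF conjunct2[OF conjunct2[OF conjunct2[OF conjunct2[OF conjunct2[OF conjunct2[OF conjunct2[OF conjunct2[OF conjunct2[OF conjunct2[OF conjunct2[OF conjunct2[OF conjunct2[OF conjunct2[OF conjunct2[OF assms[unfolded Phi_def]]]]]]]]]]]]]]]]]]]])

lemma PhiD20: assumes "Phi u" shows "(\<forall>X i l. u (vC X i l) \<le> (By + K) * u (vW X) \<and> - ((By + K) * u (vW X)) \<le> u (vC X i l))"
  by (rule conjunct2[OF conjunct2[OF conjunct2[OF conjunct2[OF conjunct2[OF conjunct2[OF conjunct2[OF conjunct2[OF conjunct2[OF conjunct2[OF conjunct2[OF conjunct2[OF conjunct2[OF conjunct2[OF conjunct2[OF conjunct2[OF conjunct2[OF conjunct2[OF conjunct2[OF assms[unfolded Phi_def]]]]]]]]]]]]]]]]]]]])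

lemmas PhiD = PhiD1 PhiD2 PhiD3 PhiD4 PhiD5 PhiD6 PhiD7 PhiD8 PhiD9 PhiD10 PhiD11 PhiD12 PhiD13 PhiD14 PhiD15 PhiD16 PhiD17 PhiD18 PhiD19 PhiD20

definition Bs :: "('p,'m,'k) vr set" where
  "Bs = range vx \<union> {vw b i S | b i S. True} \<union> range vW"

definition feas :: "(('p,'m,'k) vr \<Rightarrow> real) \<Rightarrow> bool" where
  "feas u \<longleftrightarrow> Phi u \<and> (\<forall>v\<in>Bs. u v \<in> {0,1})"

definition Xp :: "(('p,'m,'k) vr \<Rightarrow> real) \<Rightarrow> real^'p" where "Xp u = (\<chi> i. u (vx i))"
definition Yp :: "(('p,'m,'k) vr \<Rightarrow> real) \<Rightarrow> (real^'m)^'p" where "Yp u = (\<chi> i. \<chi> l. u (vy i l))"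
definition Z1p :: "(('p,'m,'k) vr \<Rightarrow> real) \<Rightarrow> real^'p" where "Z1p u = (\<chi> i. u (vz1 i))"
definition Z0p :: "(('p,'m,'k) vr \<Rightarrow> real) \<Rightarrow> real^'p" where "Z0p u = (\<chi> i. u (vz0 i))"
definition Ytp :: "bool \<Rightarrow> (('p,'m,'k) vr \<Rightarrow> real) \<Rightarrow> (real^'m)^'p" where "Ytp b u = (\<chi> i. \<chi> l. u (vyt b i l))"
definition sel :: "(('p,'m,'k) vr \<Rightarrow> real) \<Rightarrow> bool \<Rightarrow> 'p \<Rightarrow> 'k set" where
  "sel u b i = (SOME S. u (vw b i S) = 1 \<and> (\<forall>S'. S' \<noteq> S \<longrightarrow> u (vw b i S') = 0))"
definition Lmp :: "bool \<Rightarrow> (('p,'m,'k) vr \<Rightarrow> real) \<Rightarrow> (real^'k)^'p" where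
  "Lmp b u = (\<chi> i. \<chi> l. u (vlam b i (sel u b i) l))"
definition Kp :: "bool \<Rightarrow> (('p,'m,'k) vr \<Rightarrow> real) \<Rightarrow> real^'p" where "Kp b u = (\<chi> i. u (vk b i))"

lemma sel:
  assumes "feas u"
  shows "u (vw b i (sel u b i)) = 1" "S' \<noteq> sel u b i \<Longrightarrow> u (vw b i S') = 0"
proof -
  have P: "Phi u" and bin: "\<forall>S. u (vw b i S) \<in> {0,1}" using assms unfolding feas_def Bs_def by auto
  have "\<exists>S. u (vw b i S) = 1 \<and> (\<forall>S'. S' \<noteq> S \<longrightarrow> u (vw b i S') = 0)"
    using onehot[of UNIV "\<lambda>S. u (vw b i S)"] bin PhiD(2)[OF P] by auto
  then have "u (vw b i (sel u b i)) = 1 \<and> (\<forall>S'. S' \<noteq> sel u b i \<longrightarrow> u (vw b i S') = 0)"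
    unfolding sel_def by (rule someI_ex)
  then show "u (vw b i (sel u b i)) = 1" "S' \<noteq> sel u b i \<Longrightarrow> u (vw b i S') = 0" by auto
qed

lemma gl_eq: "g i (of_bool b) (Ytp b u $ i) $ l' = gl b i l' u"
  unfolding gl_def g_comp Ytp_def by simp

lemma feas_KKT:
  assumes fe: "feas u"
  shows "KKT f g i (of_bool b) (Yp u) (Ytp b u $ i) (Lmp b u $ i)"
proof -
  let ?S = "sel u b i"
  have P: "Phi u" using fe unfolding feas_def by simp
  have w1: "u (vw b i ?S) = 1" and w0: "\<And>S'. S' \<noteq> ?S \<Longrightarrow> u (vw b i S') = 0" using sel[OF fe] by auto
  have c0': "u (vc b i S' l) = 0" if "S' \<noteq> ?S" for S' l
    using PhiD(4)[OF P, rule_format, of b i S' l] w0[OF that] by simp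
  have csum: "(\<Sum>S\<in>UNIV. u (vc b i S l)) = u (vc b i ?S l)" for l
    by (rule sum.mono_neutral_cong_right[where S = "{?S}", simplified]) (auto simp: c0')
  have cYl: "cY i (Yp u) $ l = u (vc b i ?S l)" for l
    using PhiD(3)[OF P, rule_format, of b i l] csum[of l] unfolding cY_comp Yp_def by simp
  have stat: "cY i (Yp u) + (\<Sum>l\<in>UNIV. Lmp b u $ i $ l *\<^sub>R Am i $ l) = 0"
  proof (subst vec_eq_iff, rule allI)
    fix m
    have "u (vc b i ?S m) + (\<Sum>l'\<in>UNIV. u (vlam b i ?S l') * Am i $ l' $ m) = 0"
      using PhiD(5)[OF P] by blast
    then show "(cY i (Yp u) + (\<Sum>l\<in>UNIV. Lmp b u $ i $ l *\<^sub>R Am i $ l)) $ m = 0 $ m"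
      by (simp add: cYl Lmp_def)
  qed
  have gle: "g i (of_bool b) (Ytp b u $ i) $ l \<le> 0" for l
    using PhiD(1)[OF P] unfolding gl_eq by blast
  have compl: "Lmp b u $ i $ l * g i (of_bool b) (Ytp b u $ i) $ l = 0" for l
  proof (cases "l \<in> ?S")
    case True
    then have "- gl b i l u \<le> 0" using PhiD(7)[OF P, rule_format, of l ?S b i] w1 by simp
    then have "gl b i l u = 0" using gle[of l] unfolding gl_eq by simp
    then show ?thesis unfolding gl_eq by simp
  next
    case False
    then have "u (vlam b i ?S l) = 0" using PhiD(6)[OF P, rule_format, of b i ?S l] by simp
    then show ?thesis by (simp add: Lmp_def)
  qed
  have nn: "0 \<le> Lmp b u $ i $ l" for l using PhiD(6)[OF P] unfolding Lmp_def by simp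
  show ?thesis unfolding KKT_iff using stat gle compl nn by blast
qed

lemma feas_t:
  assumes fe: "feas u"
  shows "(\<Sum>S\<in>UNIV. u (vt b i S)) = - (cY i (Yp u) \<bullet> (Ytp b u $ i))"
proof -
  let ?S = "sel u b i"
  have P: "Phi u" using fe unfolding feas_def by simp
  have w0: "\<And>S'. S' \<noteq> ?S \<Longrightarrow> u (vw b i S') = 0" using sel[OF fe] by auto
  have t0: "u (vt b i S') = 0" if "S' \<noteq> ?S" for S'
    using PhiD(9)[OF P, rule_format, of b i S'] w0[OF that] by simp
  have "(\<Sum>S\<in>UNIV. u (vt b i S)) = u (vt b i ?S)"
    by (rule sum.mono_neutral_cong_right[where S = "{?S}", simplified]) (auto simp: t0)
  also have "\<dots> = (\<Sum>l'\<in>UNIV. Lmp b u $ i $ l' * (bb i $ l' - of_bool b * a i $ l'))"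
    using PhiD(8)[OF P] unfolding Lmp_def by simp
  also have "\<dots> = - (cY i (Yp u) \<bullet> (Ytp b u $ i))"
    using KKT_val[OF feas_KKT[OF fe, of i b]] by simp
  finally show ?thesis .
qed

lemma feas_P:
  assumes fe: "feas u"
  shows "P_feas f g K (Xp u) (Yp u) (Ytp True u) (Ytp False u) (Lmp True u) (Lmp False u)
           (Kp True u) (Kp False u) (Z1p u) (Z0p u)"
proof -
  have P: "Phi u" using fe unfolding feas_def by simp
  have xb: "u (vx i) \<in> {0,1}" for i using fe unfolding feas_def Bs_def by auto
  have eq: "f i 1 (Ytp True u $ i) (Yp u) + Kp True u $ i - Z1p u $ i - Kp False u $ i + Z0p u $ i
            = f i 0 (Ytp False u $ i) (Yp u)" for i
  proof -
    have "f i 1 (Ytp True u $ i) (Yp u) - f i 0 (Ytp False u $ i) (Yp u)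
        = al i - (\<Sum>S\<in>UNIV. u (vt True i S)) + (\<Sum>S\<in>UNIV. u (vt False i S))"
      unfolding fdiff feas_t[OF fe] by simp
    moreover have "al i - (\<Sum>S\<in>UNIV. u (vt True i S)) + (\<Sum>S\<in>UNIV. u (vt False i S)) + u (vk True i) - u (vz1 i)
          - u (vk False i) + u (vz0 i) = 0" using PhiD(12)[OF P] by blast
    ultimately show ?thesis unfolding Kp_def Z1p_def Z0p_def by simp
  qed
  show ?thesis unfolding P_feas_def
  proof (rule allI, intro conjI)
    fix i
    show "Xp u $ i \<in> {0,1}" using xb by (simp add: Xp_def)
    show "KKT f g i 1 (Yp u) (Ytp True u $ i) (Lmp True u $ i)" using feas_KKT[OF fe, of i True] by simp
    show "KKT f g i 0 (Yp u) (Ytp False u $ i) (Lmp False u $ i)" using feas_KKT[OF fe, of i False] by simp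
    show "0 \<le> Kp True u $ i" "0 \<le> Kp False u $ i" using PhiD(10)[OF P] unfolding Kp_def by auto
    show "0 \<le> Z1p u $ i" "0 \<le> Z0p u $ i" using PhiD(11)[OF P] unfolding Z1p_def Z0p_def by auto
    show "f i 1 (Ytp True u $ i) (Yp u) + Kp True u $ i - Z1p u $ i - Kp False u $ i + Z0p u $ i
            = f i 0 (Ytp False u $ i) (Yp u)" by (rule eq)
    show "Kp True u $ i + Z1p u $ i \<le> Xp u $ i * K"
      using PhiD(13)[OF P] unfolding Kp_def Z1p_def Xp_def by auto
    show "Kp False u $ i + Z0p u $ i \<le> (1 - Xp u $ i) * K"
      using PhiD(14)[OF P] unfolding Kp_def Z0p_def Xp_def by auto
    show "\<forall>l. Ytp False u $ i $ l - Xp u $ i * K \<le> Yp u $ i $ l \<and> Yp u $ i $ l \<le> Ytp False u $ i $ l + Xp u $ i * K"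
      using PhiD(15)[OF P] unfolding Ytp_def Xp_def Yp_def by auto
    show "\<forall>l. Ytp True u $ i $ l - (1 - Xp u $ i) * K \<le> Yp u $ i $ l \<and> Yp u $ i $ l \<le> Ytp True u $ i $ l + (1 - Xp u $ i) * K"
      using PhiD(16)[OF P] unfolding Ytp_def Xp_def Yp_def by auto
  qed
qed

end

context gm2 begin

lemma P_feas_ex:
  assumes PF: "P_feas f g K x y yt1 yt0 l1 l0 k1 k0 z1 z0"
  shows "\<exists>u. feas u \<and> Xp u = x \<and> Yp u = y \<and> Z1p u = z1 \<and> Z0p u = z0"
proof -
  define ytv where "ytv b = (if b then yt1 else yt0)" for b
  define lmv where "lmv b = (if b then l1 else l0)" for b
  define kv where "kv b = (if b then k1 else k0)" for b
  define Sst where "Sst b i = {l. lmv b $ i $ l \<noteq> 0}" for b i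
  define Xs where "Xs = {i. x $ i = 1}"
  define tv where "tv b i = (\<Sum>l'\<in>UNIV. lmv b $ i $ l' * (bb i $ l' - of_bool b * a i $ l'))" for b i
  define u :: "('p,'m,'k) vr \<Rightarrow> real" where "u = case_sum (case_sum (\<lambda>i. x$i) (case_sum (\<lambda>(i,l). y$i$l) (case_sum (\<lambda>i. z1$i) (\<lambda>i. z0$i))))
   (case_sum (\<lambda>(b,i,l). ytv b $i$l)
   (case_sum (\<lambda>(b,i,S). if S = Sst b i then 1 else 0)
   (case_sum (\<lambda>(b,i,S,l). if S = Sst b i then cY i y $ l else 0)
   (case_sum (\<lambda>(b,i,S,l). if S = Sst b i then lmv b $i$l else 0)
   (case_sum (\<lambda>(b,i,S). if S = Sst b i then tv b i else 0)
   (case_sum (\<lambda>(b,i). kv b $ i)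
   (case_sum (\<lambda>X. if X = Xs then 1 else 0)
   (\<lambda>(X,i,l). if X = Xs then y$i$l else 0))))))))"
  have uv: "u (vx i) = x$i" "u (vy i l) = y$i$l" "u (vz1 i) = z1$i" "u (vz0 i) = z0$i"
    "u (vyt b i l) = ytv b $ i $ l" "u (vw b i S) = (if S = Sst b i then 1 else 0)"
    "u (vc b i S l) = (if S = Sst b i then cY i y $ l else 0)"
    "u (vlam b i S l') = (if S = Sst b i then lmv b $ i $ l' else 0)"
    "u (vt b i S) = (if S = Sst b i then tv b i else 0)"
    "u (vk b i) = kv b $ i" "u (vW X) = (if X = Xs then 1 else 0)"
    "u (vC X i l) = (if X = Xs then y$i$l else 0)" for i l b S l' X
    unfolding u_def by simp_all
  have PFi: "x $ i \<in> {0,1} \<and>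
     KKT f g i 1 y (yt1 $ i) (l1 $ i) \<and> KKT f g i 0 y (yt0 $ i) (l0 $ i) \<and>
     0 \<le> k1 $ i \<and> 0 \<le> k0 $ i \<and> 0 \<le> z1 $ i \<and> 0 \<le> z0 $ i \<and>
     f i 1 (yt1 $ i) y + k1 $ i - z1 $ i - k0 $ i + z0 $ i = f i 0 (yt0 $ i) y \<and>
     k1 $ i + z1 $ i \<le> x $ i * K \<and> k0 $ i + z0 $ i \<le> (1 - x $ i) * K \<and>
     (\<forall>l. yt0 $ i $ l - x $ i * K \<le> y $ i $ l \<and> y $ i $ l \<le> yt0 $ i $ l + x $ i * K) \<and>
     (\<forall>l. yt1 $ i $ l - (1 - x $ i) * K \<le> y $ i $ l \<and> y $ i $ l \<le> yt1 $ i $ l + (1 - x $ i) * K)" for i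
    using PF unfolding P_feas_def by blast
  have KKTb: "KKT f g i (of_bool b) y (ytv b $ i) (lmv b $ i)" for b i
    using PFi[of i] by (cases b) (auto simp: ytv_def lmv_def)
  have xb: "x $ i \<in> {0,1}" for i using PFi by blast
  have inK: "ytv b $ i \<in> Kset g i (of_bool b)" for b i
    using KKTb[where b=b and i=i] unfolding KKT_iff Kset_def by blast
  have ytb: "\<bar>ytv b $ i $ l\<bar> \<le> By" for b i l
    using By[OF _ inK[where b=b and i=i]] by (cases b) auto
  have yb: "\<bar>y $ i $ l\<bar> \<le> By + K" for i l
  proof -
    have "yt0 $ i $ l - x $ i * K \<le> y $ i $ l \<and> y $ i $ l \<le> yt0 $ i $ l + x $ i * K" using PFi[of i] by blast
    moreover have "0 \<le> x $ i * K" "x $ i * K \<le> K" using xb[of i] K0 by auto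
    moreover have "\<bar>yt0 $ i $ l\<bar> \<le> By" using ytb[where b=False and i=i and l=l] by (simp add: ytv_def)
    ultimately show ?thesis by linarith
  qed
  have ybnd: "\<forall>j l2. \<bar>y$j$l2\<bar> \<le> By + K" using yb by blast
  have gl_u: "gl b i l' u = g i (of_bool b) (ytv b $ i) $ l'" for b i l'
    unfolding gl_def g_comp uv by simp
  have stat: "cY i y $ l + (\<Sum>l'\<in>UNIV. lmv b $ i $ l' * Am i $ l' $ l) = 0" for b i l
  proof -
    have "cY i y + (\<Sum>l'\<in>UNIV. lmv b $ i $ l' *\<^sub>R Am i $ l') = 0" using KKTb[where b=b and i=i] unfolding KKT_iff by blast
    then have "(cY i y + (\<Sum>l'\<in>UNIV. lmv b $ i $ l' *\<^sub>R Am i $ l')) $ l = 0" by simp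
    then show ?thesis by simp
  qed
  have compl: "lmv b $ i $ l' * g i (of_bool b) (ytv b $ i) $ l' = 0" for b i l'
    using KKTb[where b=b and i=i] unfolding KKT_iff by blast
  have gle: "g i (of_bool b) (ytv b $ i) $ l' \<le> 0" for b i l'
    using KKTb[where b=b and i=i] unfolding KKT_iff by blast
  have lnn: "0 \<le> lmv b $ i $ l'" for b i l'
    using KKTb[where b=b and i=i] unfolding KKT_iff by blast
  have tvv: "tv b i = - (cY i y \<bullet> (ytv b $ i))" for b i
    using KKT_val[OF KKTb[where b=b and i=i]] unfolding tv_def by simp
  have c1: "\<forall>b i l'. gl b i l' u \<le> 0" using gle by (simp add: gl_u)
  have c2: "\<forall>b i. (\<Sum>S\<in>UNIV. u (vw b i S)) = 1" by (simp add: uv)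
  have c3: "\<forall>b i l. (\<Sum>S\<in>UNIV. u (vc b i S l)) = c0 i $ l + (\<Sum>j\<in>UNIV-{i}. \<Sum>l2\<in>UNIV. M i j $ l $ l2 * u (vy j l2))"
    by (simp add: uv cY_comp)
  have c4: "\<forall>b i S l. u (vc b i S l) \<le> Cc * u (vw b i S) \<and> - (Cc * u (vw b i S)) \<le> u (vc b i S l)"
  proof (intro allI)
    fix b i S l
    have "- Cc \<le> cY i y $ l" "cY i y $ l \<le> Cc"
      using abs_le_D1[OF Cc[OF ybnd, of i l]] abs_le_D2[OF Cc[OF ybnd, of i l]] by linarith+
    then show "u (vc b i S l) \<le> Cc * u (vw b i S) \<and> - (Cc * u (vw b i S)) \<le> u (vc b i S l)"
      by (simp add: uv)
  qed
  have c5: "\<forall>b i S l. u (vc b i S l) + (\<Sum>l'\<in>UNIV. u (vlam b i S l') * Am i $ l' $ l) = 0"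
    using stat by (simp add: uv)
  have c6: "\<forall>b i S l'. 0 \<le> u (vlam b i S l') \<and> (l' \<notin> S \<longrightarrow> u (vlam b i S l') \<le> 0)"
    using lnn by (simp add: uv Sst_def)
  have c7: "\<forall>b i S l'. l' \<in> S \<longrightarrow> - gl b i l' u \<le> Bg * (1 - u (vw b i S))"
  proof (intro allI impI)
    fix b i and S :: "'k set" and l' :: 'k assume "l' \<in> S"
    show "- gl b i l' u \<le> Bg * (1 - u (vw b i S))"
    proof (cases "S = Sst b i")
      case True
      then have "lmv b $ i $ l' \<noteq> 0" using \<open>l' \<in> S\<close> by (simp add: Sst_def)
      then have "g i (of_bool b) (ytv b $ i) $ l' = 0" using compl[where b=b and i=i and l'=l'] by simp
      then show ?thesis using True by (simp add: gl_u uv)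
    next
      case False
      have "\<bar>g i (of_bool b) (ytv b $ i) $ l'\<bar> \<le> Bg" using Bg[OF _ inK[where b=b and i=i]] by (cases b) auto
      then show ?thesis using False by (simp add: gl_u uv)
    qed
  qed
  have c8: "\<forall>b i S. u (vt b i S) = (\<Sum>l'\<in>UNIV. u (vlam b i S l') * (bb i $ l' - of_bool b * a i $ l'))"
    by (simp add: uv tv_def)
  have c9: "\<forall>b i S. u (vt b i S) \<le> T * u (vw b i S) \<and> - (T * u (vw b i S)) \<le> u (vt b i S)"
  proof (intro allI)
    fix b i S
    have "\<bar>cY i y \<bullet> (ytv b $ i)\<bar> \<le> T" using Tb[OF ybnd] ytb by blast
    then show "u (vt b i S) \<le> T * u (vw b i S) \<and> - (T * u (vw b i S)) \<le> u (vt b i S)"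
      by (auto simp: uv tvv abs_le_iff)
  qed
  have c10: "\<forall>b i. 0 \<le> u (vk b i)" using PFi by (simp add: uv kv_def)
  have c11: "\<forall>i. 0 \<le> u (vz1 i) \<and> 0 \<le> u (vz0 i)" using PFi by (simp add: uv)
  have c12: "\<forall>i. al i - (\<Sum>S\<in>UNIV. u (vt True i S)) + (\<Sum>S\<in>UNIV. u (vt False i S)) + u (vk True i) - u (vz1 i)
          - u (vk False i) + u (vz0 i) = 0"
  proof
    fix i
    have "f i 1 (yt1 $ i) y + k1 $ i - z1 $ i - k0 $ i + z0 $ i = f i 0 (yt0 $ i) y" using PFi[of i] by blast
    moreover have "f i 1 (yt1 $ i) y - f i 0 (yt0 $ i) y = al i + cY i y \<bullet> yt1 $ i - cY i y \<bullet> yt0 $ i"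
      by (rule fdiff)
    moreover have "tv True i = - (cY i y \<bullet> yt1 $ i)" "tv False i = - (cY i y \<bullet> yt0 $ i)"
      using tvv[where b=True and i=i] tvv[where b=False and i=i] by (simp_all add: ytv_def)
    ultimately show "al i - (\<Sum>S\<in>UNIV. u (vt True i S)) + (\<Sum>S\<in>UNIV. u (vt False i S)) + u (vk True i) - u (vz1 i)
          - u (vk False i) + u (vz0 i) = 0"
      by (simp add: uv kv_def)
  qed
  have c13: "\<forall>i. u (vk True i) + u (vz1 i) \<le> u (vx i) * K" using PFi by (simp add: uv kv_def)
  have c14: "\<forall>i. u (vk False i) + u (vz0 i) \<le> (1 - u (vx i)) * K" using PFi by (simp add: uv kv_def)
  have c15: "\<forall>i l. u (vyt False i l) - u (vx i) * K \<le> u (vy i l) \<and> u (vy i l) \<le> u (vyt False i l) + u (vx i) * K"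
    using PFi by (simp add: uv ytv_def)
  have c16: "\<forall>i l. u (vyt True i l) - (1 - u (vx i)) * K \<le> u (vy i l) \<and> u (vy i l) \<le> u (vyt True i l) + (1 - u (vx i)) * K"
    using PFi by (simp add: uv ytv_def)
  have c17: "(\<Sum>X\<in>UNIV. u (vW X)) = 1" by (simp add: uv)
  have c18: "\<forall>i. u (vx i) = (\<Sum>X\<in>{X. i \<in> X}. u (vW X))"
  proof
    fix i
    have "(\<Sum>X\<in>{X. i \<in> X}. u (vW X)) = (if Xs \<in> {X. i \<in> X} then 1 else 0)"
      by (simp add: uv)
    also have "\<dots> = x $ i" using xb[of i] by (auto simp: Xs_def)
    finally show "u (vx i) = (\<Sum>X\<in>{X. i \<in> X}. u (vW X))" by (simp add: uv)
  qed
  have c19: "\<forall>i l. u (vy i l) = (\<Sum>X\<in>UNIV. u (vC X i l))" by (simp add: uv)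
  have c20: "\<forall>X i l. u (vC X i l) \<le> (By + K) * u (vW X) \<and> - ((By + K) * u (vW X)) \<le> u (vC X i l)"
  proof (intro allI)
    fix X i l
    have "- (By + K) \<le> y $ i $ l" "y $ i $ l \<le> By + K"
      using abs_le_D1[OF yb[of i l]] abs_le_D2[OF yb[of i l]] by linarith+
    then show "u (vC X i l) \<le> (By + K) * u (vW X) \<and> - ((By + K) * u (vW X)) \<le> u (vC X i l)"
      by (simp add: uv)
  qed
  have "Phi u" unfolding Phi_def
    by (intro conjI c1 c2 c3 c4 c5 c6 c7 c8 c9 c10 c11 c12 c13 c14 c15 c16 c17 c18 c19 c20)
  moreover have "\<forall>v\<in>Bs. u v \<in> {0,1}" unfolding Bs_def
  proof (intro ballI)
    fix v :: "('p,'m,'k) vr" assume "v \<in> range vx \<union> {vw b i S | b i S. True} \<union> range vW"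
    then show "u v \<in> {0,1}" by (auto simp: uv) (use xb in blast)
  qed
  moreover have "Xp u = x" "Yp u = y" "Z1p u = z1" "Z0p u = z0"
    by (simp_all add: vec_eq_iff Xp_def Yp_def Z1p_def Z0p_def uv)
  ultimately show ?thesis unfolding feas_def by blast
qed

end

lemma vec2_expand:
  fixes u :: "'v::finite \<Rightarrow> real"
  shows "(\<chi> i. \<chi> l. u (h i l)) = (\<Sum>v\<in>UNIV. u v *\<^sub>R (\<chi> i. \<chi> l. if v = h i l then 1 else (0::real)))"
proof -
  have e: "u v * (if v = w then 1 else 0) = (if v = w then u v else 0)" for v w by simp
  show ?thesis by (simp add: vec_eq_iff e)
qed

lemma vec1_expand:
  fixes u :: "'v::finite \<Rightarrow> real"
  shows "(\<chi> i. u (h i)) = (\<Sum>v\<in>UNIV. u v *\<^sub>R (\<chi> i. if v = h i then 1 else (0::real)))"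
proof -
  have e: "u v * (if v = w then 1 else 0) = (if v = w then u v else 0)" for v w by simp
  show ?thesis by (simp add: vec_eq_iff e)
qed

context gm2 begin

definition bx :: "'p set \<Rightarrow> real^'p" where "bx X = (\<chi> i. if i \<in> X then 1 else 0)"
definition Cv :: "'p set \<Rightarrow> (('p,'m,'k) vr \<Rightarrow> real) \<Rightarrow> (real^'m)^'p" where
  "Cv X u = (\<chi> i. \<chi> l. u (vC X i l))"
definition obj :: "(('p,'m,'k) vr \<Rightarrow> real) \<Rightarrow> real" where
  "obj u = (\<Sum>X\<in>UNIV. F (bx X) (Cv X u) - F (bx X) 0 + F (bx X) 0 * u (vW X)) + G (Z1p u, Z0p u)"

lemma lindesc_Phi: "lindesc Phi"
  unfolding Phi_def[abs_def] gl_def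
  by (intro lindesc_rules affn_rules affn_sum finite)

lemma qpsd_obj: "qpsd obj"
proof -
  have FX: "cq_or_lin (F (bx X))" for X using hA2 unfolding A2_def bx_def by auto
  have G: "cq_or_lin G" using hA2 unfolding A2_def by auto
  have t: "qpsd (\<lambda>u. F (bx X) (Cv X u) - F (bx X) 0 + F (bx X) 0 * u (vW X))" for X
  proof -
    have Q1: "qpsd (\<lambda>u. F (bx X) (Cv X u))"
      by (rule qpsd_comp[OF FX, where B = "\<lambda>v. \<chi> i l. if v = vC X i l then 1 else (0::real)"])
         (unfold Cv_def, rule vec2_expand)
    have H: "qpsd (\<lambda>u. F (bx X) (Cv X u) + (- F (bx X) 0 + F (bx X) 0 * u (vW X)))"
      by (rule qpsd_add[OF Q1 qpsd_affn]) (intro affn_rules)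
    have eq: "\<And>u. F (bx X) (Cv X u) - F (bx X) 0 + F (bx X) 0 * u (vW X)
               = F (bx X) (Cv X u) + (- F (bx X) 0 + F (bx X) 0 * u (vW X))" by simp
    show ?thesis unfolding eq by (rule H)
  qed
  have LG: "(Z1p u, Z0p u) = (\<Sum>v\<in>UNIV. u v *\<^sub>R ((\<chi> i. if v = vz1 i then 1 else 0), (\<chi> i. if v = vz0 i then 1 else 0)))"
    for u :: "('p,'m,'k) vr \<Rightarrow> real"
  proof -
    have "Z1p u = (\<Sum>v\<in>UNIV. u v *\<^sub>R (\<chi> i. if v = vz1 i then 1 else 0))"
      unfolding Z1p_def by (rule vec1_expand)
    moreover have "Z0p u = (\<Sum>v\<in>UNIV. u v *\<^sub>R (\<chi> i. if v = vz0 i then 1 else 0))"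
      unfolding Z0p_def by (rule vec1_expand)
    ultimately show ?thesis by (simp add: prod_eq_iff fst_sum snd_sum)
  qed
  have "qpsd (\<lambda>u. G (Z1p u, Z0p u))" by (rule qpsd_comp[OF G LG])
  then show ?thesis unfolding obj_def[abs_def]
    by (intro qpsd_add qpsd_sum t finite)
qed

lemma obj_feas:
  assumes fe: "feas u"
  shows "obj u = F (Xp u) (Yp u) + G (Z1p u, Z0p u)"
proof -
  have P: "Phi u" using fe unfolding feas_def by simp
  have bin: "\<forall>X. u (vW X) \<in> {0,1}" using fe unfolding feas_def Bs_def by auto
  obtain Xs where X1: "u (vW Xs) = 1" and X0: "\<And>X. X \<noteq> Xs \<Longrightarrow> u (vW X) = 0"
    using onehot[of UNIV "\<lambda>X. u (vW X)"] bin PhiD(17)[OF P] by auto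
  have C0: "u (vC X i l) = 0" if "X \<noteq> Xs" for X i l
    using PhiD(20)[OF P, rule_format, of X i l] X0[OF that] by simp
  have CvX: "Cv X u = 0" if "X \<noteq> Xs" for X
    using C0[OF that] by (simp add: Cv_def vec_eq_iff)
  have yC: "u (vy i l) = u (vC Xs i l)" for i l
  proof -
    have "(\<Sum>X\<in>UNIV. u (vC X i l)) = u (vC Xs i l)"
      by (rule sum.mono_neutral_cong_right[where S = "{Xs}", simplified]) (auto simp: C0)
    then show ?thesis using PhiD(19)[OF P] by simp
  qed
  have CvXs: "Cv Xs u = Yp u" by (simp add: Cv_def Yp_def vec_eq_iff yC)
  have WW: "u (vW X) = (if X = Xs then 1 else 0)" for X using X1 X0 by auto
  have Xp: "Xp u = bx Xs"
  proof -
    have "u (vx i) = (if i \<in> Xs then 1 else 0)" for i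
    proof -
      have "u (vx i) = (\<Sum>X\<in>{X. i \<in> X}. u (vW X))" using PhiD(18)[OF P] by simp
      also have "\<dots> = (\<Sum>X\<in>{X. i \<in> X}. (if X = Xs then 1 else 0))" by (simp only: WW)
      also have "\<dots> = (if i \<in> Xs then 1 else 0)" by simp
      finally show ?thesis .
    qed
    then show ?thesis by (simp add: Xp_def bx_def vec_eq_iff)
  qed
  have "(\<Sum>X\<in>UNIV. F (bx X) (Cv X u) - F (bx X) 0 + F (bx X) 0 * u (vW X)) = F (bx Xs) (Yp u)"
  proof -
    have "(\<Sum>X\<in>UNIV. F (bx X) (Cv X u) - F (bx X) 0 + F (bx X) 0 * u (vW X))
        = F (bx Xs) (Cv Xs u) - F (bx Xs) 0 + F (bx Xs) 0 * u (vW Xs)"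
      by (rule sum.mono_neutral_cong_right[where S = "{Xs}", simplified]) (auto simp: CvX X0)
    then show ?thesis by (simp add: CvXs X1)
  qed
  then show ?thesis unfolding obj_def Xp by simp
qed

end

context gm2 begin

lemma P_pert1:
  assumes "P_feas f g K x y yt1 yt0 l1 l0 k1 k0 z1 z0" "0 < h" "h \<le> z1$i" "h \<le> k1$i"
  shows "P_feas f g K x y yt1 yt0 l1 l0 (k1 - h *\<^sub>R axis i 1) k0 (z1 - h *\<^sub>R axis i 1) z0"
  using assms unfolding P_feas_def
  apply (intro allI)
  subgoal for j
    apply (drule spec[of _ j])
    apply (cases "j = i")
     apply (auto simp: axis_def)
    done
  done

lemma P_pert0:
  assumes "P_feas f g K x y yt1 yt0 l1 l0 k1 k0 z1 z0" "0 < h" "h \<le> z0$i" "h \<le> k0$i"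
  shows "P_feas f g K x y yt1 yt0 l1 l0 k1 (k0 - h *\<^sub>R axis i 1) z1 (z0 - h *\<^sub>R axis i 1)"
  using assms unfolding P_feas_def
  apply (intro allI)
  subgoal for j
    apply (drule spec[of _ j])
    apply (cases "j = i")
     apply (auto simp: axis_def)
    done
  done

lemma argmin_KKT: "xi \<in> {0,1} \<Longrightarrow> is_argmin f g i xi Y yi \<longleftrightarrow> (\<exists>lam. KKT f g i xi Y yi lam)"
  using hA1 unfolding A1_def by blast

lemma opt_BQE:
  assumes fe: "feas u" and opt: "\<forall>u'. feas u' \<longrightarrow> obj u \<le> obj u'"
  shows "BQE f g (Xp u) (Yp u) (Z1p u + Z0p u)"
proof -
  define x where "x = Xp u"
  define y where "y = Yp u"
  define yt1 where "yt1 = Ytp True u"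
  define yt0 where "yt0 = Ytp False u"
  define l1 where "l1 = Lmp True u"
  define l0 where "l0 = Lmp False u"
  define k1 where "k1 = Kp True u"
  define k0 where "k0 = Kp False u"
  define z1 where "z1 = Z1p u"
  define z0 where "z0 = Z0p u"
  have PF: "P_feas f g K x y yt1 yt0 l1 l0 k1 k0 z1 z0"
    using feas_P[OF fe] unfolding x_def y_def yt1_def yt0_def l1_def l0_def k1_def k0_def z1_def z0_def .
  have PFi: "x $ i \<in> {0,1} \<and>
     KKT f g i 1 y (yt1 $ i) (l1 $ i) \<and> KKT f g i 0 y (yt0 $ i) (l0 $ i) \<and>
     0 \<le> k1 $ i \<and> 0 \<le> k0 $ i \<and> 0 \<le> z1 $ i \<and> 0 \<le> z0 $ i \<and>
     f i 1 (yt1 $ i) y + k1 $ i - z1 $ i - k0 $ i + z0 $ i = f i 0 (yt0 $ i) y \<and>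
     k1 $ i + z1 $ i \<le> x $ i * K \<and> k0 $ i + z0 $ i \<le> (1 - x $ i) * K \<and>
     (\<forall>l. yt0 $ i $ l - x $ i * K \<le> y $ i $ l \<and> y $ i $ l \<le> yt0 $ i $ l + x $ i * K) \<and>
     (\<forall>l. yt1 $ i $ l - (1 - x $ i) * K \<le> y $ i $ l \<and> y $ i $ l \<le> yt1 $ i $ l + (1 - x $ i) * K)" for i
    using PF unfolding P_feas_def by blast
  have znn: "\<forall>j. 0 \<le> z1 $ j \<and> 0 \<le> z0 $ j" using PFi by blast
  have objG: "obj u = F x y + G (z1, z0)"
    using obj_feas[OF fe] unfolding x_def y_def z1_def z0_def .
  have A2d: "(\<exists>D>0. ((\<lambda>t. G (z1 + t *\<^sub>R axis i 1, z0)) has_real_derivative D) (at 0)) \<and>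
        (\<exists>D>0. ((\<lambda>t. G (z1, z0 + t *\<^sub>R axis i 1)) has_real_derivative D) (at 0))" for i
    using hA2 znn unfolding A2_def by blast
  have min1: "z1 $ i = 0 \<or> k1 $ i = 0" for i
  proof (rule ccontr)
    assume "\<not> (z1 $ i = 0 \<or> k1 $ i = 0)"
    then have pos: "0 < z1 $ i" "0 < k1 $ i" using PFi[of i] by auto
    obtain D where D: "D > 0" "((\<lambda>t. G (z1 + t *\<^sub>R axis i 1, z0)) has_real_derivative D) (at 0)"
      using A2d[of i] by blast
    obtain d where d: "d > 0" "\<And>h. h > 0 \<Longrightarrow> h < d \<Longrightarrow> G (z1 + (0 - h) *\<^sub>R axis i 1, z0) < G (z1 + 0 *\<^sub>R axis i 1, z0)"
      using DERIV_pos_inc_left[OF D(2) D(1)] by auto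
    define h where "h = min (d / 2) (min (z1 $ i) (k1 $ i))"
    have h: "0 < h" "h < d" "h \<le> z1 $ i" "h \<le> k1 $ i" using d(1) pos unfolding h_def by auto
    have Gl: "G (z1 - h *\<^sub>R axis i 1, z0) < G (z1, z0)" using d(2)[OF h(1,2)] by simp
    obtain u' where u': "feas u'" "Xp u' = x" "Yp u' = y" "Z1p u' = z1 - h *\<^sub>R axis i 1" "Z0p u' = z0"
      using P_feas_ex[OF P_pert1[OF PF h(1,3,4)]] by blast
    have "obj u' = F x y + G (z1 - h *\<^sub>R axis i 1, z0)" using obj_feas[OF u'(1)] u'(2-5) by simp
    moreover have "obj u \<le> obj u'" using opt u'(1) by blast
    ultimately show False using objG Gl by simp
  qed
  have min0: "z0 $ i = 0 \<or> k0 $ i = 0" for i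
  proof (rule ccontr)
    assume "\<not> (z0 $ i = 0 \<or> k0 $ i = 0)"
    then have pos: "0 < z0 $ i" "0 < k0 $ i" using PFi[of i] by auto
    obtain D where D: "D > 0" "((\<lambda>t. G (z1, z0 + t *\<^sub>R axis i 1)) has_real_derivative D) (at 0)"
      using A2d[of i] by blast
    obtain d where d: "d > 0" "\<And>h. h > 0 \<Longrightarrow> h < d \<Longrightarrow> G (z1, z0 + (0 - h) *\<^sub>R axis i 1) < G (z1, z0 + 0 *\<^sub>R axis i 1)"
      using DERIV_pos_inc_left[OF D(2) D(1)] by auto
    define h where "h = min (d / 2) (min (z0 $ i) (k0 $ i))"
    have h: "0 < h" "h < d" "h \<le> z0 $ i" "h \<le> k0 $ i" using d(1) pos unfolding h_def by auto
    have Gl: "G (z1, z0 - h *\<^sub>R axis i 1) < G (z1, z0)" using d(2)[OF h(1,2)] by simp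
    obtain u' where u': "feas u'" "Xp u' = x" "Yp u' = y" "Z1p u' = z1" "Z0p u' = z0 - h *\<^sub>R axis i 1"
      using P_feas_ex[OF P_pert0[OF PF h(1,3,4)]] by blast
    have "obj u' = F x y + G (z1, z0 - h *\<^sub>R axis i 1)" using obj_feas[OF u'(1)] u'(2-5) by simp
    moreover have "obj u \<le> obj u'" using opt u'(1) by blast
    ultimately show False using objG Gl by simp
  qed
  have "BQE f g x y (z1 + z0)" unfolding BQE_def
  proof (intro allI)
    fix i
    have xi: "x $ i \<in> {0,1}" using PFi[of i] by blast
    show "x $ i \<in> {0,1} \<and> is_argmin f g i (x $ i) y (y $ i) \<and> 0 \<le> (z1 + z0) $ i \<and>
      (\<exists>yx. is_argmin f g i (1 - x $ i) y yx \<and>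
         f i (x $ i) (y $ i) y - (z1 + z0) $ i \<le> f i (1 - x $ i) yx y \<and>
         (\<forall>\<zeta>'\<ge>0. f i (x $ i) (y $ i) y - \<zeta>' \<le> f i (1 - x $ i) yx y \<longrightarrow> (z1 + z0) $ i \<le> \<zeta>'))"
    proof (cases "x $ i = 1")
      case True
      have k0: "k0 $ i = 0" "z0 $ i = 0" using PFi[of i] True by auto
      have yi: "y $ i = yt1 $ i"
      proof -
        have "\<forall>l. yt1 $ i $ l \<le> y $ i $ l \<and> y $ i $ l \<le> yt1 $ i $ l" using PFi[of i] True by simp
        then show ?thesis by (auto simp: vec_eq_iff intro: order_antisym)
      qed
      have am1: "is_argmin f g i 1 y (yt1 $ i)" using argmin_KKT[of 1] PFi[of i] by auto
      have am0: "is_argmin f g i 0 y (yt0 $ i)" using argmin_KKT[of 0] PFi[of i] by auto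
      have eq: "f i 1 (yt1 $ i) y + k1 $ i - z1 $ i = f i 0 (yt0 $ i) y" using PFi[of i] k0 by simp
      show ?thesis
      proof (intro conjI exI[of _ "yt0 $ i"])
        show "x $ i \<in> {0,1}" by (rule xi)
        show "is_argmin f g i (x $ i) y (y $ i)" using am1 True yi by simp
        show "0 \<le> (z1 + z0) $ i" using PFi[of i] by simp
        show "is_argmin f g i (1 - x $ i) y (yt0 $ i)" using am0 True by simp
        show "f i (x $ i) (y $ i) y - (z1 + z0) $ i \<le> f i (1 - x $ i) (yt0 $ i) y"
          using eq PFi[of i] True yi k0 by simp
        show "\<forall>\<zeta>'\<ge>0. f i (x $ i) (y $ i) y - \<zeta>' \<le> f i (1 - x $ i) (yt0 $ i) y \<longrightarrow> (z1 + z0) $ i \<le> \<zeta>'"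
          using eq min1[of i] True yi k0 by auto
      qed
    next
      case False
      then have x0: "x $ i = 0" using xi by simp
      have k1: "k1 $ i = 0" "z1 $ i = 0" using PFi[of i] x0 by auto
      have yi: "y $ i = yt0 $ i"
      proof -
        have "\<forall>l. yt0 $ i $ l \<le> y $ i $ l \<and> y $ i $ l \<le> yt0 $ i $ l" using PFi[of i] x0 by simp
        then show ?thesis by (auto simp: vec_eq_iff intro: order_antisym)
      qed
      have am1: "is_argmin f g i 1 y (yt1 $ i)" using argmin_KKT[of 1] PFi[of i] by auto
      have am0: "is_argmin f g i 0 y (yt0 $ i)" using argmin_KKT[of 0] PFi[of i] by auto
      have eq: "f i 1 (yt1 $ i) y - k0 $ i + z0 $ i = f i 0 (yt0 $ i) y" using PFi[of i] k1 by simp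
      show ?thesis
      proof (intro conjI exI[of _ "yt1 $ i"])
        show "x $ i \<in> {0,1}" by (rule xi)
        show "is_argmin f g i (x $ i) y (y $ i)" using am0 x0 yi by simp
        show "0 \<le> (z1 + z0) $ i" using PFi[of i] by simp
        show "is_argmin f g i (1 - x $ i) y (yt1 $ i)" using am1 x0 by simp
        show "f i (x $ i) (y $ i) y - (z1 + z0) $ i \<le> f i (1 - x $ i) (yt1 $ i) y"
          using eq PFi[of i] x0 yi k1 by simp
        show "\<forall>\<zeta>'\<ge>0. f i (x $ i) (y $ i) y - \<zeta>' \<le> f i (1 - x $ i) (yt1 $ i) y \<longrightarrow> (z1 + z0) $ i \<le> \<zeta>'"
          using eq min0[of i] x0 yi k1 by auto
      qed
    qed
  qed
  then show ?thesis unfolding x_def y_def z1_def z0_def .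
qed

end

context gm2 begin

lemma build_P:
  assumes xb: "\<And>i. x$i \<in> {0,1}" and am: "\<And>i. is_argmin f g i (x$i) y (y$i)"
    and amx: "\<And>i. is_argmin f g i (1 - x$i) y (yx i)" and zn: "\<And>i. 0 \<le> \<zeta> i"
    and ineq: "\<And>i. f i (x$i) (y$i) y - \<zeta> i \<le> f i (1 - x$i) (yx i) y"
    and zb: "\<And>i. \<zeta> i \<le> Fd"
    and Fd: "\<And>i Y v v'. (\<forall>j l. \<bar>Y$j$l\<bar> \<le> By) \<Longrightarrow> (\<forall>l. \<bar>v$l\<bar> \<le> By) \<Longrightarrow> (\<forall>l. \<bar>v'$l\<bar> \<le> By)
              \<Longrightarrow> \<bar>f i 1 v Y - f i 0 v' Y\<bar> \<le> Fd"
    and K1: "2 * By \<le> K" and K2: "3 * Fd \<le> K"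
  shows "\<exists>yt1 yt0 l1 l0 k1 k0. P_feas f g K x y yt1 yt0 l1 l0 k1 k0
            (\<chi> i. if x$i = 1 then \<zeta> i else 0) (\<chi> i. if x$i = 1 then 0 else \<zeta> i)"
proof -
  have "\<forall>i. \<exists>lam. KKT f g i (x$i) y (y$i) lam" using am argmin_KKT xb by blast
  then obtain La where La: "\<And>i. KKT f g i (x$i) y (y$i) (La i)" by metis
  have x1: "1 - x$i \<in> {0,1}" for i using xb[of i] by auto
  have "\<forall>i. \<exists>lam. KKT f g i (1 - x$i) y (yx i) lam" using amx argmin_KKT x1 by blast
  then obtain Lx where Lx: "\<And>i. KKT f g i (1 - x$i) y (yx i) (Lx i)" by metis
  have yK: "y$i \<in> Kset g i (x$i)" for i using am[of i] unfolding is_argmin_def by blast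
  have yxK: "yx i \<in> Kset g i (1 - x$i)" for i using amx[of i] unfolding is_argmin_def by blast
  have yb: "\<forall>l. \<bar>y$i$l\<bar> \<le> By" for i using By[OF xb yK] by blast
  have yxb: "\<forall>l. \<bar>yx i$l\<bar> \<le> By" for i using By[OF x1 yxK] by blast
  have Yb: "\<forall>j l. \<bar>y$j$l\<bar> \<le> By" using yb by blast
  have box: "\<bar>y$i$l - yx i$l\<bar> \<le> K" for i l using spec[OF yb[of i], of l] spec[OF yxb[of i], of l] K1 by (smt (verit))
  define yt1 where "yt1 = (\<chi> i. if x$i = 1 then y$i else yx i)"
  define yt0 where "yt0 = (\<chi> i. if x$i = 1 then yx i else y$i)"
  define l1 where "l1 = (\<chi> i. if x$i = 1 then La i else Lx i)"
  define l0 where "l0 = (\<chi> i. if x$i = 1 then Lx i else La i)"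
  define k1 where "k1 = (\<chi> i. if x$i = 1 then f i 0 (yx i) y - f i 1 (y$i) y + \<zeta> i else 0)"
  define k0 where "k0 = (\<chi> i. if x$i = 1 then 0 else f i 1 (yx i) y - f i 0 (y$i) y + \<zeta> i)"
  have "P_feas f g K x y yt1 yt0 l1 l0 k1 k0
            (\<chi> i. if x$i = 1 then \<zeta> i else 0) (\<chi> i. if x$i = 1 then 0 else \<zeta> i)"
    unfolding P_feas_def
  proof (rule allI)
    fix i
    show "x $ i \<in> {0,1} \<and>
     KKT f g i 1 y (yt1 $ i) (l1 $ i) \<and> KKT f g i 0 y (yt0 $ i) (l0 $ i) \<and>
     0 \<le> k1 $ i \<and> 0 \<le> k0 $ i \<and> 0 \<le> (\<chi> i. if x$i = 1 then \<zeta> i else 0) $ i \<and> 0 \<le> (\<chi> i. if x$i = 1 then 0 else \<zeta> i) $ i \<and>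
     f i 1 (yt1 $ i) y + k1 $ i - (\<chi> i. if x$i = 1 then \<zeta> i else 0) $ i - k0 $ i + (\<chi> i. if x$i = 1 then 0 else \<zeta> i) $ i = f i 0 (yt0 $ i) y \<and>
     k1 $ i + (\<chi> i. if x$i = 1 then \<zeta> i else 0) $ i \<le> x $ i * K \<and> k0 $ i + (\<chi> i. if x$i = 1 then 0 else \<zeta> i) $ i \<le> (1 - x $ i) * K \<and>
     (\<forall>l. yt0 $ i $ l - x $ i * K \<le> y $ i $ l \<and> y $ i $ l \<le> yt0 $ i $ l + x $ i * K) \<and>
     (\<forall>l. yt1 $ i $ l - (1 - x $ i) * K \<le> y $ i $ l \<and> y $ i $ l \<le> yt1 $ i $ l + (1 - x $ i) * K)"
    proof (cases "x$i = 1")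
      case True
      have d: "\<bar>f i 1 (y$i) y - f i 0 (yx i) y\<bar> \<le> Fd" using Fd[OF Yb yb yxb] .
      have ie: "f i 1 (y$i) y - \<zeta> i \<le> f i 0 (yx i) y" using ineq[of i] True by simp
      have bx: "\<forall>l. yx i $ l - K \<le> y $ i $ l \<and> y $ i $ l \<le> yx i $ l + K"
      proof
        fix l show "yx i $ l - K \<le> y $ i $ l \<and> y $ i $ l \<le> yx i $ l + K"
          using box[of i l] by (simp add: abs_le_iff)
      qed
      show ?thesis using True La[of i] Lx[of i] xb[of i] zn[of i] zb[of i] d ie bx K2
        unfolding yt1_def yt0_def l1_def l0_def k1_def k0_def by (auto simp: abs_le_iff)
    next
      case False
      then have x0: "x$i = 0" using xb[of i] by simp
      have d: "\<bar>f i 1 (yx i) y - f i 0 (y$i) y\<bar> \<le> Fd" using Fd[OF Yb yxb yb] .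
      have ie: "f i 0 (y$i) y - \<zeta> i \<le> f i 1 (yx i) y" using ineq[of i] x0 by simp
      have bx: "\<forall>l. yx i $ l - K \<le> y $ i $ l \<and> y $ i $ l \<le> yx i $ l + K"
      proof
        fix l show "yx i $ l - K \<le> y $ i $ l \<and> y $ i $ l \<le> yx i $ l + K"
          using box[of i l] by (simp add: abs_le_iff)
      qed
      show ?thesis using x0 La[of i] Lx[of i] zn[of i] zb[of i] d ie bx K2
        unfolding yt1_def yt0_def l1_def l0_def k1_def k0_def by (auto simp: abs_le_iff)
    qed
  qed
  then show ?thesis by blast
qed


lemma NE_iff:
  assumes Fd: "\<And>i Y v v'. (\<forall>j l. \<bar>Y$j$l\<bar> \<le> By) \<Longrightarrow> (\<forall>l. \<bar>v$l\<bar> \<le> By) \<Longrightarrow> (\<forall>l. \<bar>v'$l\<bar> \<le> By)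
              \<Longrightarrow> \<bar>f i 1 v Y - f i 0 v' Y\<bar> \<le> Fd"
    and K1: "2 * By \<le> K" and K2: "3 * Fd \<le> K" and Fd0: "0 \<le> Fd"
  shows "NE f g x y \<longleftrightarrow> (\<exists>yt1 yt0 l1 l0 k1 k0. P_feas f g K x y yt1 yt0 l1 l0 k1 k0 0 0)"
proof
  assume ne: "NE f g x y"
  have "\<forall>i. \<exists>yx. is_argmin f g i (1 - x $ i) y yx \<and> f i (x $ i) (y $ i) y \<le> f i (1 - x $ i) yx y"
    using ne unfolding NE_def by blast
  then obtain yx where yx: "\<And>i. is_argmin f g i (1 - x $ i) y (yx i) \<and> f i (x $ i) (y $ i) y \<le> f i (1 - x $ i) (yx i) y"
    by metis
  have "\<exists>yt1 yt0 l1 l0 k1 k0. P_feas f g K x y yt1 yt0 l1 l0 k1 k0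
            (\<chi> i. if x$i = 1 then (\<lambda>_. 0) i else 0) (\<chi> i. if x$i = 1 then 0 else (\<lambda>_. 0) i)"
    by (rule build_P[where yx = yx and \<zeta> = "\<lambda>_. 0", OF _ _ _ _ _ _ Fd K1 K2])
       (use ne yx Fd0 in \<open>auto simp: NE_def\<close>)
  moreover have "(\<chi> i. if x$i = 1 then (\<lambda>_. 0::real) i else 0) = 0" "(\<chi> i. if x$i = 1 then 0 else (\<lambda>_. 0::real) i) = 0"
    by (simp_all add: vec_eq_iff)
  ultimately show "\<exists>yt1 yt0 l1 l0 k1 k0. P_feas f g K x y yt1 yt0 l1 l0 k1 k0 0 0" by metis
next
  assume "\<exists>yt1 yt0 l1 l0 k1 k0. P_feas f g K x y yt1 yt0 l1 l0 k1 k0 0 0"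
  then obtain yt1 yt0 l1 l0 k1 k0 where PF: "P_feas f g K x y yt1 yt0 l1 l0 k1 k0 0 0" by blast
  show "NE f g x y" unfolding NE_def
  proof (rule allI)
    fix i
    have PFi: "x $ i \<in> {0,1} \<and>
     KKT f g i 1 y (yt1 $ i) (l1 $ i) \<and> KKT f g i 0 y (yt0 $ i) (l0 $ i) \<and>
     0 \<le> k1 $ i \<and> 0 \<le> k0 $ i \<and>
     f i 1 (yt1 $ i) y + k1 $ i - k0 $ i = f i 0 (yt0 $ i) y \<and>
     k1 $ i \<le> x $ i * K \<and> k0 $ i \<le> (1 - x $ i) * K \<and>
     (\<forall>l. yt0 $ i $ l - x $ i * K \<le> y $ i $ l \<and> y $ i $ l \<le> yt0 $ i $ l + x $ i * K) \<and>
     (\<forall>l. yt1 $ i $ l - (1 - x $ i) * K \<le> y $ i $ l \<and> y $ i $ l \<le> yt1 $ i $ l + (1 - x $ i) * K)"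
      using PF unfolding P_feas_def by simp
    have am1: "is_argmin f g i 1 y (yt1 $ i)" using argmin_KKT[of 1] PFi by auto
    have am0: "is_argmin f g i 0 y (yt0 $ i)" using argmin_KKT[of 0] PFi by auto
    show "x $ i \<in> {0,1} \<and> is_argmin f g i (x $ i) y (y $ i) \<and>
      (\<exists>yx. is_argmin f g i (1 - x $ i) y yx \<and> f i (x $ i) (y $ i) y \<le> f i (1 - x $ i) yx y)"
    proof (cases "x $ i = 1")
      case True
      have yi: "y $ i = yt1 $ i"
      proof -
        have "\<forall>l. yt1 $ i $ l \<le> y $ i $ l \<and> y $ i $ l \<le> yt1 $ i $ l" using PFi True by simp
        then show ?thesis by (auto simp: vec_eq_iff intro: order_antisym)
      qed
      have "k0 $ i = 0" using PFi True by simp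
      then show ?thesis using True yi am1 am0 PFi by auto
    next
      case False
      then have x0: "x $ i = 0" using PFi by simp
      have yi: "y $ i = yt0 $ i"
      proof -
        have "\<forall>l. yt0 $ i $ l \<le> y $ i $ l \<and> y $ i $ l \<le> yt0 $ i $ l" using PFi x0 by simp
        then show ?thesis by (auto simp: vec_eq_iff intro: order_antisym)
      qed
      have "k1 $ i = 0" using PFi x0 by simp
      then show ?thesis using x0 yi am1 am0 PFi by auto
    qed
  qed
qed

lemma BQE_P:
  assumes Fd: "\<And>i Y v v'. (\<forall>j l. \<bar>Y$j$l\<bar> \<le> By) \<Longrightarrow> (\<forall>l. \<bar>v$l\<bar> \<le> By) \<Longrightarrow> (\<forall>l. \<bar>v'$l\<bar> \<le> By)
              \<Longrightarrow> \<bar>f i 1 v Y - f i 0 v' Y\<bar> \<le> Fd"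
    and K1: "2 * By \<le> K" and K2: "3 * Fd \<le> K"
    and bq: "BQE f g x y \<zeta>"
  shows "\<exists>yt1 yt0 l1 l0 k1 k0 z1 z0. P_feas f g K x y yt1 yt0 l1 l0 k1 k0 z1 z0"
proof -
  have "\<forall>i. \<exists>yx. is_argmin f g i (1 - x $ i) y yx \<and>
         f i (x $ i) (y $ i) y - \<zeta> $ i \<le> f i (1 - x $ i) yx y \<and>
         (\<forall>\<zeta>'\<ge>0. f i (x $ i) (y $ i) y - \<zeta>' \<le> f i (1 - x $ i) yx y \<longrightarrow> \<zeta> $ i \<le> \<zeta>')"
    using bq unfolding BQE_def by blast
  then obtain yx where yx: "\<And>i. is_argmin f g i (1 - x $ i) y (yx i) \<and>
         f i (x $ i) (y $ i) y - \<zeta> $ i \<le> f i (1 - x $ i) (yx i) y \<and>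
         (\<forall>\<zeta>'\<ge>0. f i (x $ i) (y $ i) y - \<zeta>' \<le> f i (1 - x $ i) (yx i) y \<longrightarrow> \<zeta> $ i \<le> \<zeta>')"
    by metis
  have xb: "x$i \<in> {0,1}" and am: "is_argmin f g i (x$i) y (y$i)" and zn: "0 \<le> \<zeta>$i" for i
    using bq unfolding BQE_def by blast+
  have x1: "1 - x$i \<in> {0,1}" for i using xb[of i] by auto
  have yK: "y$i \<in> Kset g i (x$i)" for i using am[of i] unfolding is_argmin_def by blast
  have yxK: "yx i \<in> Kset g i (1 - x$i)" for i using yx[of i] unfolding is_argmin_def by blast
  have yb: "\<forall>l. \<bar>y$i$l\<bar> \<le> By" for i using By[OF xb yK] by blast
  have yxb: "\<forall>l. \<bar>yx i$l\<bar> \<le> By" for i using By[OF x1 yxK] by blast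
  have Yb: "\<forall>j l. \<bar>y$j$l\<bar> \<le> By" using yb by blast
  have dif: "\<bar>f i (x $ i) (y $ i) y - f i (1 - x $ i) (yx i) y\<bar> \<le> Fd" for i
  proof (cases "x $ i = 1")
    case True then show ?thesis using Fd[OF Yb yb yxb, of i] by simp
  next
    case False then have "x $ i = 0" using xb[of i] by simp
    then show ?thesis using Fd[OF Yb yxb yb, of i] by (simp add: abs_minus_commute)
  qed
  have zb: "\<zeta> $ i \<le> Fd" for i
  proof -
    let ?z = "max 0 (f i (x $ i) (y $ i) y - f i (1 - x $ i) (yx i) y)"
    have "\<zeta> $ i \<le> ?z" using yx[of i] by auto
    moreover have "?z \<le> Fd" using dif[of i] by auto
    ultimately show ?thesis by linarith
  qed
  show ?thesis
    using build_P[where yx = yx and \<zeta> = "\<lambda>i. \<zeta> $ i", OF xb am _ zn _ zb Fd K1 K2] yx by blast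
qed

end

lemma lin_bound:
  fixes c v :: "'a \<Rightarrow> real"
  assumes "finite A" "\<forall>l\<in>A. \<bar>v l\<bar> \<le> R"
  shows "\<bar>\<Sum>l\<in>A. c l * v l\<bar> \<le> (\<Sum>l\<in>A. \<bar>c l\<bar>) * R"
proof -
  have "\<bar>\<Sum>l\<in>A. c l * v l\<bar> \<le> (\<Sum>l\<in>A. \<bar>c l * v l\<bar>)" by (rule sum_abs)
  also have "\<dots> \<le> (\<Sum>l\<in>A. \<bar>c l\<bar> * R)"
    using assms(2) by (intro sum_mono) (simp add: abs_mult mult_left_mono)
  also have "\<dots> = (\<Sum>l\<in>A. \<bar>c l\<bar>) * R" by (simp add: sum_distrib_right)
  finally show ?thesis .
qed

lemma fin_bound:
  fixes P :: "'a::finite \<Rightarrow> real \<Rightarrow> bool"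
  assumes ex: "\<And>x. \<exists>C. P x C" and mono: "\<And>x C C'. P x C \<Longrightarrow> C \<le> C' \<Longrightarrow> P x C'"
  shows "\<exists>C. \<forall>x. P x C"
proof -
  obtain C where C: "\<And>x. P x (C x)" using ex by metis
  have "P x (Max (range C))" for x
    by (rule mono[OF C]) (simp add: Max_ge)
  then show ?thesis by blast
qed

lemma nat_encode:
  fixes L :: "(('v::finite \<Rightarrow> real) \<times> real) list" and e :: "'v \<Rightarrow> nat"
  assumes bij: "bij_betw e UNIV {..<N}"
  shows "mip_feasible N (e ` Bs) (length L) (\<lambda>r j. fst (L!r) (inv_into UNIV e j)) (\<lambda>r. snd (L!r)) z \<longleftrightarrow>
         (\<forall>j\<ge>N. z j = 0) \<and> (\<forall>v\<in>Bs. z (e v) \<in> {0,1}) \<and> (\<forall>(a,c)\<in>set L. (\<Sum>v\<in>UNIV. a v * z (e v)) \<le> c)"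
    and "mip_obj N (\<lambda>j k. Q (inv_into UNIV e j) (inv_into UNIV e k)) (\<lambda>j. a (inv_into UNIV e j)) d z
        = (\<Sum>v\<in>UNIV. \<Sum>w\<in>UNIV. Q v w * z (e v) * z (e w)) + (\<Sum>v\<in>UNIV. a v * z (e v)) + d"
proof -
  have inj: "inj e" using bij by (simp add: bij_betw_def)
  have ei: "inv_into UNIV e (e v) = v" for v using inj by simp
  have rs: "(\<Sum>j<N. h j) = (\<Sum>v\<in>UNIV. h (e v))" for h :: "nat \<Rightarrow> real"
    using sum.reindex_bij_betw[OF bij, of h] by simp
  have "(\<forall>r<length L. (\<Sum>j<N. fst (L!r) (inv_into UNIV e j) * z j) \<le> snd (L!r)) \<longleftrightarrow>
        (\<forall>(a,c)\<in>set L. (\<Sum>v\<in>UNIV. a v * z (e v)) \<le> c)"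
    unfolding rs ei by (simp add: case_prod_beta all_set_conv_all_nth)
  moreover have "(\<forall>j\<in>e ` Bs. z j \<in> {0,1}) \<longleftrightarrow> (\<forall>v\<in>Bs. z (e v) \<in> {0,1})" by blast
  ultimately show "mip_feasible N (e ` Bs) (length L) (\<lambda>r j. fst (L!r) (inv_into UNIV e j)) (\<lambda>r. snd (L!r)) z \<longleftrightarrow>
         (\<forall>j\<ge>N. z j = 0) \<and> (\<forall>v\<in>Bs. z (e v) \<in> {0,1}) \<and> (\<forall>(a,c)\<in>set L. (\<Sum>v\<in>UNIV. a v * z (e v)) \<le> c)"
    unfolding mip_feasible_def by blast
  show "mip_obj N (\<lambda>j k. Q (inv_into UNIV e j) (inv_into UNIV e k)) (\<lambda>j. a (inv_into UNIV e j)) d z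
        = (\<Sum>v\<in>UNIV. \<Sum>w\<in>UNIV. Q v w * z (e v) * z (e w)) + (\<Sum>v\<in>UNIV. a v * z (e v)) + d"
    unfolding mip_obj_def rs ei ..
qed

lemma nat_psd:
  fixes e :: "'v::finite \<Rightarrow> nat"
  assumes bij: "bij_betw e UNIV {..<N}"
    and nn: "\<And>u. 0 \<le> (\<Sum>v\<in>UNIV. \<Sum>w\<in>UNIV. Q v w * u v * u w)"
  shows "psd N (\<lambda>j k. Q (inv_into UNIV e j) (inv_into UNIV e k))"
proof -
  have inj: "inj e" using bij by (simp add: bij_betw_def)
  have ei: "inv_into UNIV e (e v) = v" for v using inj by simp
  have rs: "(\<Sum>j<N. h j) = (\<Sum>v\<in>UNIV. h (e v))" for h :: "nat \<Rightarrow> real"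
    using sum.reindex_bij_betw[OF bij, of h] by simp
  show ?thesis unfolding psd_def rs ei using nn[of "\<lambda>v. _ (e v)"] by simp
qed

context gm begin

lemma cY_bound: "\<exists>C. \<forall>i Y l. (\<forall>j l2. \<bar>Y$j$l2\<bar> \<le> R) \<longrightarrow> \<bar>cY i Y $ l\<bar> \<le> C"
proof -
  define W where "W i l = \<bar>c0 i $ l\<bar> + (\<Sum>j\<in>UNIV-{i}. (\<Sum>l2\<in>UNIV. \<bar>M i j $ l $ l2\<bar>) * R)" for i l
  have pw: "\<bar>cY i Y $ l\<bar> \<le> W i l" if Y: "\<forall>j l2. \<bar>Y$j$l2\<bar> \<le> R" for i Y l
  proof -
    have "\<bar>cY i Y $ l\<bar> \<le> \<bar>c0 i $ l\<bar> + \<bar>\<Sum>j\<in>UNIV-{i}. \<Sum>l2\<in>UNIV. M i j $ l $ l2 * Y$j$l2\<bar>"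
      unfolding cY_comp by (rule abs_triangle_ineq)
    also have "\<bar>\<Sum>j\<in>UNIV-{i}. \<Sum>l2\<in>UNIV. M i j $ l $ l2 * Y$j$l2\<bar>
        \<le> (\<Sum>j\<in>UNIV-{i}. \<bar>\<Sum>l2\<in>UNIV. M i j $ l $ l2 * Y$j$l2\<bar>)" by (rule sum_abs)
    also have "\<dots> \<le> (\<Sum>j\<in>UNIV-{i}. (\<Sum>l2\<in>UNIV. \<bar>M i j $ l $ l2\<bar>) * R)"
      using Y by (intro sum_mono lin_bound) auto
    finally show ?thesis unfolding W_def by simp
  qed
  have "\<exists>C. \<forall>il. (case il of (i,l) \<Rightarrow> W i l) \<le> C"
    by (rule fin_bound) auto
  then obtain C where "\<And>i l. W i l \<le> C" by fastforce
  then show ?thesis using pw order_trans by metis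
qed

lemma g_bound: "\<exists>C. \<forall>i xi v l. xi \<in> {0,1} \<longrightarrow> (\<forall>l2. \<bar>v$l2\<bar> \<le> R) \<longrightarrow> \<bar>g i xi v $ l\<bar> \<le> C"
proof -
  define W where "W i l = \<bar>a i $ l\<bar> + (\<Sum>l2\<in>UNIV. \<bar>Am i $ l $ l2\<bar>) * R + \<bar>bb i $ l\<bar>" for i l
  have pw: "\<bar>g i xi v $ l\<bar> \<le> W i l" if xi: "xi \<in> {0,1}" and v: "\<forall>l2. \<bar>v$l2\<bar> \<le> R" for i xi v l
  proof -
    have "\<bar>xi * a i $ l\<bar> \<le> \<bar>a i $ l\<bar>" using xi by auto
    moreover have "\<bar>\<Sum>l2\<in>UNIV. Am i $ l $ l2 * v $ l2\<bar> \<le> (\<Sum>l2\<in>UNIV. \<bar>Am i $ l $ l2\<bar>) * R"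
      using v by (intro lin_bound) auto
    ultimately show ?thesis unfolding g_comp W_def by linarith
  qed
  have "\<exists>C. \<forall>il. (case il of (i,l) \<Rightarrow> W i l) \<le> C"
    by (rule fin_bound) auto
  then obtain C where "\<And>i l. W i l \<le> C" by fastforce
  then show ?thesis using pw order_trans by metis
qed

lemma dot_bound:
  fixes c v :: "real^'m"
  assumes Cc: "\<forall>l. \<bar>c $ l\<bar> \<le> C" and v: "\<forall>l. \<bar>v $ l\<bar> \<le> B" and B: "0 \<le> B"
  shows "\<bar>c \<bullet> v\<bar> \<le> (\<Sum>l\<in>(UNIV::'m set). C) * B"
proof -
  have "\<bar>c \<bullet> v\<bar> = \<bar>\<Sum>l\<in>UNIV. c $ l * v $ l\<bar>" by (simp add: inner_vec_def)
  also have "\<dots> \<le> (\<Sum>l\<in>UNIV. \<bar>c $ l\<bar>) * B" using v by (intro lin_bound) auto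
  also have "\<dots> \<le> (\<Sum>l\<in>(UNIV::'m set). C) * B"
  proof (rule mult_right_mono[OF _ B])
    show "(\<Sum>l\<in>UNIV. \<bar>c $ l\<bar>) \<le> (\<Sum>l\<in>(UNIV::'m set). C)"
      by (rule sum_mono) (use Cc in auto)
  qed
  finally show ?thesis .
qed

end

lemma A3_dec:
  fixes f :: "'p::finite \<Rightarrow> real \<Rightarrow> real^'m::finite \<Rightarrow> (real^'m)^'p \<Rightarrow> real"
    and g :: "'p \<Rightarrow> real \<Rightarrow> real^'m \<Rightarrow> real^'k::finite"
  assumes "A3 f g"
  shows "\<exists>c0 M rest al a Am bb. (\<forall>i xi v Y. f i xi v Y = (c0 i + (\<Sum>j\<in>UNIV-{i}. M i j *v Y$j)) \<bullet> v + rest i xi Y) \<and>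
     (\<forall>i Y. rest i 1 Y - rest i 0 Y = al i) \<and> (\<forall>i xi v. g i xi v = xi *\<^sub>R a i + Am i *v v - bb i)"
proof -
  have A: "\<forall>i. \<exists>fx fy. (\<forall>xi yi Y. f i xi yi Y = fx xi Y + fy yi Y) \<and>
        (\<exists>\<alpha> \<beta> \<gamma>. \<forall>xi Y. fx xi Y = \<alpha> * xi + (\<Sum>j\<in>UNIV-{i}. \<beta> j \<bullet> Y $ j) + \<gamma>) \<and>
        (\<exists>c0 M h. \<forall>yi Y. fy yi Y = (c0 + (\<Sum>j\<in>UNIV-{i}. M j *v Y $ j)) \<bullet> yi + h Y)"
    using assms unfolding A3_def by (rule conjunct1)
  have B: "\<forall>i. \<exists>(a::real^'k) (A::real^'m^'k) b. \<forall>xi yi. g i xi yi = xi *\<^sub>R a + A *v yi - b"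
    using assms unfolding A3_def by (rule conjunct2)
  have "\<forall>i. \<exists>t. (\<forall>xi v Y. f i xi v Y = (fst t + (\<Sum>j\<in>UNIV-{i}. fst (snd t) j *v Y$j)) \<bullet> v + fst (snd (snd t)) xi Y) \<and>
     (\<forall>Y. fst (snd (snd t)) 1 Y - fst (snd (snd t)) 0 Y = snd (snd (snd t)))"
  proof
    fix i
    from A have "\<exists>fx fy. (\<forall>xi yi Y. f i xi yi Y = fx xi Y + fy yi Y) \<and>
        (\<exists>\<alpha> \<beta> \<gamma>. \<forall>xi Y. fx xi Y = \<alpha> * xi + (\<Sum>j\<in>UNIV-{i}. \<beta> j \<bullet> Y $ j) + \<gamma>) \<and>
        (\<exists>c0 M h. \<forall>yi Y. fy yi Y = (c0 + (\<Sum>j\<in>UNIV-{i}. M j *v Y $ j)) \<bullet> yi + h Y)" by (rule spec)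
    then obtain fx fy \<alpha> \<beta> \<gamma> c0 M h where 1: "\<forall>xi yi Y. f i xi yi Y = fx xi Y + fy yi Y"
      and 2: "\<forall>xi Y. fx xi Y = \<alpha> * xi + (\<Sum>j\<in>UNIV-{i}. \<beta> j \<bullet> Y $ j) + \<gamma>"
      and 3: "\<forall>yi Y. fy yi Y = (c0 + (\<Sum>j\<in>UNIV-{i}. M j *v Y $ j)) \<bullet> yi + h Y"
      by (elim exE conjE)
    show "\<exists>t. (\<forall>xi v Y. f i xi v Y = (fst t + (\<Sum>j\<in>UNIV-{i}. fst (snd t) j *v Y$j)) \<bullet> v + fst (snd (snd t)) xi Y) \<and>
     (\<forall>Y. fst (snd (snd t)) 1 Y - fst (snd (snd t)) 0 Y = snd (snd (snd t)))"
      by (rule exI[of _ "(c0, M, \<lambda>xi Y. fx xi Y + h Y, \<alpha>)"]) (use 1 2 3 in simp)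
  qed
  from choice[OF this] obtain T where T: "\<forall>i. (\<forall>xi v Y. f i xi v Y = (fst (T i) + (\<Sum>j\<in>UNIV-{i}. fst (snd (T i)) j *v Y$j)) \<bullet> v + fst (snd (snd (T i))) xi Y) \<and>
     (\<forall>Y. fst (snd (snd (T i))) 1 Y - fst (snd (snd (T i))) 0 Y = snd (snd (snd (T i))))" by blast
  have "\<forall>i. \<exists>t. \<forall>xi yi. g i xi yi = xi *\<^sub>R fst t + fst (snd t) *v yi - snd (snd t)"
  proof
    fix i
    from B have "\<exists>(a::real^'k) (A::real^'m^'k) b. \<forall>xi yi. g i xi yi = xi *\<^sub>R a + A *v yi - b" by (rule spec)
    then obtain a A b where "\<forall>xi yi. g i xi yi = xi *\<^sub>R a + A *v yi - b" by (elim exE)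
    then show "\<exists>t. \<forall>xi yi. g i xi yi = xi *\<^sub>R fst t + fst (snd t) *v yi - snd (snd t)"
      by (intro exI[of _ "(a, A, b)"]) simp
  qed
  from choice[OF this] obtain U where U: "\<forall>i. \<forall>xi yi. g i xi yi = xi *\<^sub>R fst (U i) + fst (snd (U i)) *v yi - snd (snd (U i))"
    by blast
  show ?thesis
    apply (rule exI[of _ "\<lambda>i. fst (T i)"], rule exI[of _ "\<lambda>i. fst (snd (T i))"], rule exI[of _ "\<lambda>i. fst (snd (snd (T i)))"],
        rule exI[of _ "\<lambda>i. snd (snd (snd (T i)))"], rule exI[of _ "\<lambda>i. fst (U i)"], rule exI[of _ "\<lambda>i. fst (snd (U i))"],
        rule exI[of _ "\<lambda>i. snd (snd (U i))"])
    using T U by blast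
qed

theorem theorem4:
  fixes f :: "'p::finite \<Rightarrow> real \<Rightarrow> real^'m::finite \<Rightarrow> (real^'m)^'p \<Rightarrow> real"
    and g :: "'p \<Rightarrow> real \<Rightarrow> real^'m \<Rightarrow> real^'k::finite"
    and F :: "real^'p \<Rightarrow> (real^'m)^'p \<Rightarrow> real"
    and G :: "(real^'p) \<times> (real^'p) \<Rightarrow> real"
  assumes indep: "\<And>i xi yi Y Y'. (\<forall>j. j \<noteq> i \<longrightarrow> Y $ j = Y' $ j) \<Longrightarrow> f i xi yi Y = f i xi yi Y'"
    and hA1: "A1 f g" and hA2: "A2 F G" and hA3: "A3 f g"
  shows "\<exists>K0>0. \<forall>K\<ge>K0. \<exists>N Bin R A b Q c d (idx :: 'p + ('p \<times> 'm) + 'p + 'p \<Rightarrow> nat).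
     inj idx \<and> (\<forall>v. idx v < N) \<and> Bin \<subseteq> {..<N} \<and> (\<forall>i. idx (Inl i) \<in> Bin) \<and> psd N Q \<and>
     (\<forall>z. mip_feasible N Bin R A b z \<longrightarrow>
        mip_obj N Q c d z = F (xof idx z) (yof idx z) + G (z1of idx z, z0of idx z)) \<and>
     {(xof idx z, yof idx z, z1of idx z, z0of idx z) | z. mip_feasible N Bin R A b z} =
       {(x, y, z1, z0) | x y z1 z0. \<exists>yt1 yt0 l1 l0 k1 k0. P_feas f g K x y yt1 yt0 l1 l0 k1 k0 z1 z0} \<and>
     (\<forall>x y. NE f g x y \<longleftrightarrow>
        (\<exists>z. mip_feasible N Bin R A b z \<and> xof idx z = x \<and> yof idx z = y \<and>
             z1of idx z = 0 \<and> z0of idx z = 0)) \<and>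
     (\<forall>z. mip_feasible N Bin R A b z \<and>
          (\<forall>z'. mip_feasible N Bin R A b z' \<longrightarrow> mip_obj N Q c d z \<le> mip_obj N Q c d z') \<longrightarrow>
          BQE f g (xof idx z) (yof idx z) (z1of idx z + z0of idx z)) \<and>
     (\<forall>x y \<zeta>. BQE f g x y \<zeta> \<longrightarrow>
        (\<exists>z. mip_feasible N Bin R A b z \<and> xof idx z = x \<and> yof idx z = y))"
proof -
  obtain c0 M rest al a Am bb where D: "(\<forall>i xi v Y. f i xi v Y = (c0 i + (\<Sum>j\<in>UNIV-{i}. M i j *v Y$j)) \<bullet> v + rest i xi Y) \<and>
     (\<forall>i Y. rest i 1 Y - rest i 0 Y = al i) \<and> (\<forall>i xi v. g i xi v = xi *\<^sub>R a i + Am i *v v - bb i)"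
    using A3_dec[OF hA3] by blast
  have fd: "\<And>i xi v Y. f i xi v Y = (c0 i + (\<Sum>j\<in>UNIV-{i}. M i j *v Y$j)) \<bullet> v + rest i xi Y"
    using D by blast
  have rd: "\<And>i Y. rest i 1 Y - rest i 0 Y = al i" using D by blast
  have gd: "\<And>i xi v. g i xi v = xi *\<^sub>R a i + Am i *v v - bb i" using D by blast
  interpret G0: gm f g c0 M rest al a Am bb
    by unfold_locales (rule fd, rule rd, rule gd)
  define S where "S = (\<Union>i. Kset g i 0 \<union> Kset g i 1)"
  have "compact S" unfolding S_def using hA1 unfolding A1_def by (intro compact_UN compact_Un) auto
  then obtain B where B: "\<forall>v\<in>S. norm v \<le> B"
    using compact_imp_bounded Elementary_Metric_Spaces.bounded_iff by metis
  define By where "By = max B 0"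
  have By0: "0 \<le> By" by (simp add: By_def)
  have Byp: "\<bar>v$l\<bar> \<le> By" if "xi \<in> {0,1}" "v \<in> Kset g i xi" for i xi v l
  proof -
    have "v \<in> S" using that unfolding S_def by auto
    then have "norm v \<le> B" using B by blast
    then show ?thesis using component_le_norm_cart[of v l] unfolding By_def by linarith
  qed
  obtain C1 where C1: "\<forall>i Y l. (\<forall>j l2. \<bar>Y$j$l2\<bar> \<le> By) \<longrightarrow> \<bar>G0.cY i Y $ l\<bar> \<le> C1"
    using G0.cY_bound by blast
  define Fd where "Fd = (\<Sum>i\<in>UNIV. \<bar>al i\<bar>) + 2 * ((\<Sum>l\<in>(UNIV::'m set). C1) * By)"
  have Fd: "\<bar>f i 1 v Y - f i 0 v' Y\<bar> \<le> Fd"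
    if Y: "\<forall>j l. \<bar>Y$j$l\<bar> \<le> By" and v: "\<forall>l. \<bar>v$l\<bar> \<le> By" and v': "\<forall>l. \<bar>v'$l\<bar> \<le> By" for i Y v v'
  proof -
    have cb: "\<forall>l. \<bar>G0.cY i Y $ l\<bar> \<le> C1" using C1 Y by blast
    have d1: "\<bar>G0.cY i Y \<bullet> v\<bar> \<le> (\<Sum>l\<in>(UNIV::'m set). C1) * By" by (rule G0.dot_bound[OF cb v By0])
    have d2: "\<bar>G0.cY i Y \<bullet> v'\<bar> \<le> (\<Sum>l\<in>(UNIV::'m set). C1) * By" by (rule G0.dot_bound[OF cb v' By0])
    have a1: "\<bar>al i\<bar> \<le> (\<Sum>i\<in>UNIV. \<bar>al i\<bar>)" by (rule member_le_sum) auto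
    show ?thesis unfolding G0.fdiff Fd_def using d1 d2 a1 by linarith
  qed
  have Fd0: "0 \<le> Fd" using Fd[of "0" "0" "0" undefined] by (simp add: By0)
  define K0 where "K0 = max 1 (max (2 * By) (3 * Fd))"
  show ?thesis
  proof (intro exI[of _ K0] conjI allI impI)
    show "0 < K0" by (simp add: K0_def)
    fix K assume KK: "K0 \<le> K"
    have K1: "2 * By \<le> K" and K2: "3 * Fd \<le> K" and Kp: "0 \<le> K" using KK unfolding K0_def by auto
    obtain Cc where Cc: "\<forall>i Y l. (\<forall>j l2. \<bar>Y$j$l2\<bar> \<le> By + K) \<longrightarrow> \<bar>G0.cY i Y $ l\<bar> \<le> Cc"
      using G0.cY_bound by blast
    define T where "T = (\<Sum>l\<in>(UNIV::'m set). Cc) * By"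
    obtain Bg where Bg: "\<forall>i xi v l. xi \<in> {0,1} \<longrightarrow> (\<forall>l2. \<bar>v$l2\<bar> \<le> By) \<longrightarrow> \<bar>g i xi v $ l\<bar> \<le> Bg"
      using G0.g_bound by blast
    interpret G2: gm2 f g c0 M rest al a Am bb F G K By Cc T Bg
    proof unfold_locales
      show "A1 f g" "A2 F G" "0 \<le> K" by (fact hA1, fact hA2, fact Kp)
      show "\<And>i xi v l. xi \<in> {0,1} \<Longrightarrow> v \<in> Kset g i xi \<Longrightarrow> \<bar>v$l\<bar> \<le> By" by (rule Byp)
      show "\<And>i Y l. (\<forall>j l2. \<bar>Y$j$l2\<bar> \<le> By + K) \<Longrightarrow> \<bar>G0.cY i Y $ l\<bar> \<le> Cc" using Cc by blast
      show "\<And>i Y v. (\<forall>j l2. \<bar>Y$j$l2\<bar> \<le> By + K) \<Longrightarrow> (\<forall>l. \<bar>v$l\<bar> \<le> By) \<Longrightarrow> \<bar>G0.cY i Y \<bullet> v\<bar> \<le> T"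
        unfolding T_def using Cc By0 by (intro G0.dot_bound) auto
      show "\<And>i xi v l. xi \<in> {0,1} \<Longrightarrow> v \<in> Kset g i xi \<Longrightarrow> \<bar>g i xi v $ l\<bar> \<le> Bg"
        using Bg Byp by blast
    qed
    obtain L where L: "\<And>u. G2.Phi u \<longleftrightarrow> (\<forall>(a,c)\<in>set L. (\<Sum>v\<in>UNIV. a v * u v) \<le> c)"
      using G2.lindesc_Phi unfolding lindesc_def by blast
    obtain Qa ca da where Qa: "\<And>u. G2.obj u = (\<Sum>v\<in>UNIV. \<Sum>w\<in>UNIV. Qa v w * u v * u w) + (\<Sum>v\<in>UNIV. ca v * u v) + da"
      and Qn: "\<And>u. 0 \<le> (\<Sum>v\<in>UNIV. \<Sum>w\<in>UNIV. Qa v w * u v * u w)"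
      using G2.qpsd_obj unfolding qpsd_def by blast
    define N where "N = card (UNIV :: ('p,'m,'k) vr set)"
    obtain e :: "('p,'m,'k) vr \<Rightarrow> nat" where bij: "bij_betw e UNIV {..<N}"
      using ex_bij_betw_finite_nat[of "UNIV :: ('p,'m,'k) vr set"] unfolding N_def atLeast0LessThan by auto
    define ei where "ei = inv_into UNIV e"
    define Bin where "Bin = e ` G2.Bs"
    define R where "R = length L"
    define A where "A = (\<lambda>r j. fst (L!r) (ei j))"
    define b where "b = (\<lambda>r. snd (L!r))"
    define Q where "Q = (\<lambda>j k. Qa (ei j) (ei k))"
    define c where "c = (\<lambda>j. ca (ei j))"
    define idx :: "'p + ('p \<times> 'm) + 'p + 'p \<Rightarrow> nat" where "idx = e \<circ> Inl"
    have inj: "inj e" using bij by (simp add: bij_betw_def)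
    have eie: "ei (e v) = v" for v unfolding ei_def using inj by simp
    have eN: "e v < N" for v using bij_betwE[OF bij] by auto
    have feasN: "mip_feasible N Bin R A b z \<longleftrightarrow> (\<forall>j\<ge>N. z j = 0) \<and> G2.feas (z \<circ> e)" for z
      unfolding Bin_def R_def A_def b_def ei_def nat_encode(1)[OF bij] G2.feas_def L by (simp add: o_def) blast
    have objN: "mip_obj N Q c da z = G2.obj (z \<circ> e)" for z
      unfolding Q_def c_def ei_def nat_encode(2)[OF bij] Qa by (simp add: o_def)
    have psdQ: "psd N Q" unfolding Q_def ei_def by (rule nat_psd[OF bij Qn])
    have proj: "xof idx z = G2.Xp (z \<circ> e)" "yof idx z = G2.Yp (z \<circ> e)"
      "z1of idx z = G2.Z1p (z \<circ> e)" "z0of idx z = G2.Z0p (z \<circ> e)" for z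
      unfolding idx_def xof_def yof_def z1of_def z0of_def G2.Xp_def G2.Yp_def G2.Z1p_def G2.Z0p_def by simp_all
    define ext where "ext u = (\<lambda>j. if j < N then u (ei j) else 0)" for u :: "('p,'m,'k) vr \<Rightarrow> real"
    have ext1: "ext u \<circ> e = u" for u by (simp add: ext_def o_def eN eie)
    have extF: "mip_feasible N Bin R A b (ext u)" if "G2.feas u" for u
      using that unfolding feasN ext1 by (simp add: ext_def)
    have fromN: "G2.feas (z \<circ> e)" if "mip_feasible N Bin R A b z" for z
      using that feasN by blast
    have projE: "xof idx (ext u) = G2.Xp u" "yof idx (ext u) = G2.Yp u"
      "z1of idx (ext u) = G2.Z1p u" "z0of idx (ext u) = G2.Z0p u" for u
      unfolding proj ext1 by simp_all
    show "\<exists>N Bin R A b Q c d (idx :: 'p + ('p \<times> 'm) + 'p + 'p \<Rightarrow> nat).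
     inj idx \<and> (\<forall>v. idx v < N) \<and> Bin \<subseteq> {..<N} \<and> (\<forall>i. idx (Inl i) \<in> Bin) \<and> psd N Q \<and>
     (\<forall>z. mip_feasible N Bin R A b z \<longrightarrow>
        mip_obj N Q c d z = F (xof idx z) (yof idx z) + G (z1of idx z, z0of idx z)) \<and>
     {(xof idx z, yof idx z, z1of idx z, z0of idx z) | z. mip_feasible N Bin R A b z} =
       {(x, y, z1, z0) | x y z1 z0. \<exists>yt1 yt0 l1 l0 k1 k0. P_feas f g K x y yt1 yt0 l1 l0 k1 k0 z1 z0} \<and>
     (\<forall>x y. NE f g x y \<longleftrightarrow>
        (\<exists>z. mip_feasible N Bin R A b z \<and> xof idx z = x \<and> yof idx z = y \<and>
             z1of idx z = 0 \<and> z0of idx z = 0)) \<and>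
     (\<forall>z. mip_feasible N Bin R A b z \<and>
          (\<forall>z'. mip_feasible N Bin R A b z' \<longrightarrow> mip_obj N Q c d z \<le> mip_obj N Q c d z') \<longrightarrow>
          BQE f g (xof idx z) (yof idx z) (z1of idx z + z0of idx z)) \<and>
     (\<forall>x y \<zeta>. BQE f g x y \<zeta> \<longrightarrow>
        (\<exists>z. mip_feasible N Bin R A b z \<and> xof idx z = x \<and> yof idx z = y))"
    proof (rule exI[of _ N], rule exI[of _ Bin], rule exI[of _ R], rule exI[of _ A], rule exI[of _ b],
        rule exI[of _ Q], rule exI[of _ c], rule exI[of _ da], rule exI[of _ idx], intro conjI allI impI)
      show "inj idx" unfolding idx_def using inj by (simp add: inj_compose)
      show "idx v < N" for v unfolding idx_def by (simp add: eN)
      show "Bin \<subseteq> {..<N}" unfolding Bin_def using eN by auto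
      show "idx (Inl i) \<in> Bin" for i unfolding idx_def Bin_def G2.Bs_def by auto
      show "psd N Q" by (rule psdQ)
      show "mip_obj N Q c da z = F (xof idx z) (yof idx z) + G (z1of idx z, z0of idx z)"
        if "mip_feasible N Bin R A b z" for z
        unfolding objN proj using G2.obj_feas[OF fromN[OF that]] .
      show "{(xof idx z, yof idx z, z1of idx z, z0of idx z) | z. mip_feasible N Bin R A b z} =
       {(x, y, z1, z0) | x y z1 z0. \<exists>yt1 yt0 l1 l0 k1 k0. P_feas f g K x y yt1 yt0 l1 l0 k1 k0 z1 z0}"
      proof (intro equalityI subsetI)
        fix t assume "t \<in> {(xof idx z, yof idx z, z1of idx z, z0of idx z) | z. mip_feasible N Bin R A b z}"
        then obtain z where t: "t = (xof idx z, yof idx z, z1of idx z, z0of idx z)" and zf: "mip_feasible N Bin R A b z"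
          by blast
        have "P_feas f g K (xof idx z) (yof idx z) (G2.Ytp True (z \<circ> e)) (G2.Ytp False (z \<circ> e))
            (G2.Lmp True (z \<circ> e)) (G2.Lmp False (z \<circ> e)) (G2.Kp True (z \<circ> e)) (G2.Kp False (z \<circ> e))
            (z1of idx z) (z0of idx z)"
          unfolding proj by (rule G2.feas_P[OF fromN[OF zf]])
        then show "t \<in> {(x, y, z1, z0) | x y z1 z0. \<exists>yt1 yt0 l1 l0 k1 k0. P_feas f g K x y yt1 yt0 l1 l0 k1 k0 z1 z0}"
          unfolding t by blast
      next
        fix t assume "t \<in> {(x, y, z1, z0) | x y z1 z0. \<exists>yt1 yt0 l1 l0 k1 k0. P_feas f g K x y yt1 yt0 l1 l0 k1 k0 z1 z0}"
        then obtain x y z1 z0 yt1 yt0 l1 l0 k1 k0 where t: "t = (x, y, z1, z0)"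
          and PF: "P_feas f g K x y yt1 yt0 l1 l0 k1 k0 z1 z0" by blast
        obtain u where u: "G2.feas u" "G2.Xp u = x" "G2.Yp u = y" "G2.Z1p u = z1" "G2.Z0p u = z0"
          using G2.P_feas_ex[OF PF] by blast
        show "t \<in> {(xof idx z, yof idx z, z1of idx z, z0of idx z) | z. mip_feasible N Bin R A b z}"
          unfolding t mem_Collect_eq by (rule exI[of _ "ext u"]) (use extF[OF u(1)] projE[of u] u in simp)
      qed
      show "NE f g x y \<longleftrightarrow> (\<exists>z. mip_feasible N Bin R A b z \<and> xof idx z = x \<and> yof idx z = y \<and>
             z1of idx z = 0 \<and> z0of idx z = 0)" for x y
      proof
        assume "NE f g x y"
        then obtain yt1 yt0 l1 l0 k1 k0 where PF: "P_feas f g K x y yt1 yt0 l1 l0 k1 k0 0 0"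
          using G2.NE_iff[OF Fd K1 K2 Fd0] by blast
        obtain u where u: "G2.feas u" "G2.Xp u = x" "G2.Yp u = y" "G2.Z1p u = 0" "G2.Z0p u = 0"
          using G2.P_feas_ex[OF PF] by blast
        show "\<exists>z. mip_feasible N Bin R A b z \<and> xof idx z = x \<and> yof idx z = y \<and> z1of idx z = 0 \<and> z0of idx z = 0"
          using extF[OF u(1)] projE[of u] u by metis
      next
        assume "\<exists>z. mip_feasible N Bin R A b z \<and> xof idx z = x \<and> yof idx z = y \<and> z1of idx z = 0 \<and> z0of idx z = 0"
        then obtain z where z: "mip_feasible N Bin R A b z" "xof idx z = x" "yof idx z = y" "z1of idx z = 0" "z0of idx z = 0"
          by blast
        have "P_feas f g K x y (G2.Ytp True (z \<circ> e)) (G2.Ytp False (z \<circ> e))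
            (G2.Lmp True (z \<circ> e)) (G2.Lmp False (z \<circ> e)) (G2.Kp True (z \<circ> e)) (G2.Kp False (z \<circ> e)) 0 0"
          using G2.feas_P[OF fromN[OF z(1)]] z(2-5) unfolding proj by simp
        then show "NE f g x y" using G2.NE_iff[OF Fd K1 K2 Fd0] by blast
      qed
      show "BQE f g (xof idx z) (yof idx z) (z1of idx z + z0of idx z)"
        if "mip_feasible N Bin R A b z \<and>
          (\<forall>z'. mip_feasible N Bin R A b z' \<longrightarrow> mip_obj N Q c da z \<le> mip_obj N Q c da z')" for z
      proof -
        have zf: "mip_feasible N Bin R A b z" and opt: "\<And>z'. mip_feasible N Bin R A b z' \<Longrightarrow> mip_obj N Q c da z \<le> mip_obj N Q c da z'"
          using that by blast+
        have "\<forall>u'. G2.feas u' \<longrightarrow> G2.obj (z \<circ> e) \<le> G2.obj u'"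
        proof (intro allI impI)
          fix u' assume "G2.feas u'"
          then have "mip_obj N Q c da z \<le> mip_obj N Q c da (ext u')" using opt extF by blast
          then show "G2.obj (z \<circ> e) \<le> G2.obj u'" unfolding objN ext1 .
        qed
        then show ?thesis unfolding proj using G2.opt_BQE[OF fromN[OF zf]] by simp
      qed
      show "\<exists>z. mip_feasible N Bin R A b z \<and> xof idx z = x \<and> yof idx z = y" if bq: "BQE f g x y \<zeta>" for x y \<zeta>
      proof -
        obtain yt1 yt0 l1 l0 k1 k0 z1 z0 where PF: "P_feas f g K x y yt1 yt0 l1 l0 k1 k0 z1 z0"
          using G2.BQE_P[OF Fd K1 K2 bq] by blast
        obtain u where u: "G2.feas u" "G2.Xp u = x" "G2.Yp u = y"
          using G2.P_feas_ex[OF PF] by blast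
        show ?thesis using extF[OF u(1)] projE[of u] u by metis
      qed
    qed
  qed
qed

end
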